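(* Let $m\ge 2$, let $e_k(\mathbf{y})$ be the $k$-th elementary symmetric function of $\mathbf{y}=\{y_1,\dots,y_m\}$, and let $Z(\mathbf{y})=\sum_{k=0}^m a_ke_k(\mathbf{y})$ with $a_0,\dots,a_m$ nonnegative reals, not all zero. The following are equivalent: (a) $Z$ satisfies the Rayleigh condition; (b) the sequence $(a_k:0\le k\le m)$ is logarithmically concave with no internal zeros; (c) $\Delta Z\{1,2\}$, a symmetric polynomial in $y_3,\dots,y_m$, is a positive linear combination of Schur functions; (d) $\Delta Z\{1,2\}$ is a positive linear combination of monomial symmetric functions.
   Context: For a multiaffine polynomial $Z$ in $y_1,\dots,y_m$, $Z_i=\partial Z/\partial y_i$, $Z_{ij}=\partial^2Z/\partial y_i\partial y_j$, $\Delta Z\{i,j\}=Z_iZ_j-Z_{ij}Z$. $Z$ satisfies the Rayleigh condition if $\Delta Z\{i,j\}(\mathbf{y})\ge0$ for all $i\ne j$ and all $\mathbf{y}$ with all $y_c>0$. A nonnegative sequence $(a_k)$ is logarithmically concave if $a_k^2\ge a_{k-1}a_{k+1}$ for all interior $k$, and has no internal zeros if $i<j<k$ and $a_ia_k\neq0$ imply $a_j\ne0$. *)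

theory Defs
  imports "HOL-Analysis.Analysis"
begin

text \<open>Points y = (y_1,...,y_m) are functions nat => real; only indices 1..m matter.\<close>

definition esym :: "nat \<Rightarrow> nat \<Rightarrow> (nat \<Rightarrow> real) \<Rightarrow> real" where
  "esym m k y = (\<Sum>S\<in>{S. S \<subseteq> {1..m} \<and> card S = k}. \<Prod>i\<in>S. y i)"

definition Zpoly :: "nat \<Rightarrow> (nat \<Rightarrow> real) \<Rightarrow> (nat \<Rightarrow> real) \<Rightarrow> real" where
  "Zpoly m a y = (\<Sum>k=0..m. a k * esym m k y)"

definition pd :: "nat \<Rightarrow> ((nat \<Rightarrow> real) \<Rightarrow> real) \<Rightarrow> (nat \<Rightarrow> real) \<Rightarrow> real" where
  "pd i f y = deriv (\<lambda>t. f (y(i := t))) (y i)"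

definition DeltaZ :: "((nat \<Rightarrow> real) \<Rightarrow> real) \<Rightarrow> nat \<Rightarrow> nat \<Rightarrow> (nat \<Rightarrow> real) \<Rightarrow> real" where
  "DeltaZ f i j y = pd i f y * pd j f y - pd j (pd i f) y * f y"

definition rayleigh :: "nat \<Rightarrow> ((nat \<Rightarrow> real) \<Rightarrow> real) \<Rightarrow> bool" where
  "rayleigh m f \<longleftrightarrow> (\<forall>i\<in>{1..m}. \<forall>j\<in>{1..m}. i \<noteq> j \<longrightarrow>
      (\<forall>y. (\<forall>c\<in>{1..m}. y c > 0) \<longrightarrow> DeltaZ f i j y \<ge> 0))"

definition log_concave :: "nat \<Rightarrow> (nat \<Rightarrow> real) \<Rightarrow> bool" where
  "log_concave m a \<longleftrightarrow> (\<forall>k. 0 < k \<and> k < m \<longrightarrow> a (k - 1) * a (k + 1) \<le> (a k)\<^sup>2)"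

definition no_internal_zeros :: "nat \<Rightarrow> (nat \<Rightarrow> real) \<Rightarrow> bool" where
  "no_internal_zeros m a \<longleftrightarrow>
     (\<forall>i j k. i < j \<and> j < k \<and> k \<le> m \<and> a i * a k \<noteq> 0 \<longrightarrow> a j \<noteq> 0)"

definition is_partition :: "nat list \<Rightarrow> bool" where
  "is_partition lam \<longleftrightarrow> sorted (rev lam) \<and> 0 \<notin> set lam"

definition monomial_sym :: "nat list \<Rightarrow> nat set \<Rightarrow> (nat \<Rightarrow> real) \<Rightarrow> real" where
  "monomial_sym lam V y =
     (\<Sum>alpha\<in>{alpha :: nat \<Rightarrow> nat. (\<forall>i. i \<notin> V \<longrightarrow> alpha i = 0) \<and>
          image_mset alpha (mset_set V) = mset lam + replicate_mset (card V - length lam) 0}.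
        \<Prod>i\<in>V. y i ^ alpha i)"

text \<open>Cells of the Young diagram of lambda (row r, column c, 0-based).\<close>
definition young_cells :: "nat list \<Rightarrow> (nat \<times> nat) set" where
  "young_cells lam = {(r, c). r < length lam \<and> c < lam ! r}"

definition ssyt :: "nat list \<Rightarrow> nat set \<Rightarrow> (nat \<times> nat \<Rightarrow> nat) set" where
  "ssyt lam V = {T. (\<forall>x. x \<notin> young_cells lam \<longrightarrow> T x = 0) \<and>
      (\<forall>x\<in>young_cells lam. T x \<in> V) \<and>
      (\<forall>r c. (r, c + 1) \<in> young_cells lam \<longrightarrow> T (r, c) \<le> T (r, c + 1)) \<and>
      (\<forall>r c. (r + 1, c) \<in> young_cells lam \<longrightarrow> T (r, c) < T (r + 1, c))}"

definition schur :: "nat list \<Rightarrow> nat set \<Rightarrow> (nat \<Rightarrow> real) \<Rightarrow> real" where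
  "schur lam V y = (\<Sum>T\<in>ssyt lam V. \<Prod>x\<in>young_cells lam. y (T x))"

definition pos_comb :: "(nat list \<Rightarrow> (nat \<Rightarrow> real) \<Rightarrow> real) \<Rightarrow> ((nat \<Rightarrow> real) \<Rightarrow> real) \<Rightarrow> bool" where
  "pos_comb b g \<longleftrightarrow> (\<exists>S c. finite S \<and> (\<forall>lam\<in>S. is_partition lam \<and> c lam > (0::real)) \<and>
      (\<forall>y. g y = (\<Sum>lam\<in>S. c lam * b lam y)))"

end

theory Submission
  imports Defs
begin


definition Qs :: "(nat \<Rightarrow> real) \<Rightarrow> nat set \<Rightarrow> (nat \<Rightarrow> real) \<Rightarrow> real" where
  "Qs a V y = (\<Sum>I\<in>Pow V. a (card I) * (\<Prod>i\<in>I. y i))"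

definition Dl :: "(nat \<Rightarrow> real) \<Rightarrow> nat set \<Rightarrow> (nat \<Rightarrow> real) \<Rightarrow> real" where
  "Dl a V y = (Qs (\<lambda>k. a (Suc k)) V y)\<^sup>2 - Qs a V y * Qs (\<lambda>k. a (Suc (Suc k))) V y"

lemma Qs_insert:
  assumes "finite V" "x \<notin> V"
  shows "Qs a (insert x V) y = Qs a V y + y x * Qs (\<lambda>k. a (Suc k)) V y"
proof -
  have fin: "finite (Pow V)" using assms by simp
  have disj: "Pow V \<inter> insert x ` Pow V = {}" using assms by auto
  have inj: "inj_on (insert x) (Pow V)"
  proof (rule inj_onI)
    fix A B assume "A \<in> Pow V" "B \<in> Pow V" "insert x A = insert x B"
    then have "insert x A - {x} = insert x B - {x}" by simp
    then show "A = B" using \<open>A \<in> Pow V\<close> \<open>B \<in> Pow V\<close> assms(2) by auto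
  qed
  have "Qs a (insert x V) y = (\<Sum>I\<in>Pow V. a (card I) * (\<Prod>i\<in>I. y i))
      + (\<Sum>I\<in>insert x ` Pow V. a (card I) * (\<Prod>i\<in>I. y i))"
    unfolding Qs_def Pow_insert using fin disj by (simp add: sum.union_disjoint)
  also have "(\<Sum>I\<in>insert x ` Pow V. a (card I) * (\<Prod>i\<in>I. y i))
      = (\<Sum>I\<in>Pow V. a (card (insert x I)) * (\<Prod>i\<in>insert x I. y i))"
    using inj by (simp add: sum.reindex)
  also have "\<dots> = (\<Sum>I\<in>Pow V. y x * (a (Suc (card I)) * (\<Prod>i\<in>I. y i)))"
  proof (rule sum.cong)
    fix I assume "I \<in> Pow V"
    then have "finite I" "x \<notin> I" using assms finite_subset by auto
    then show "a (card (insert x I)) * (\<Prod>i\<in>insert x I. y i) = y x * (a (Suc (card I)) * (\<Prod>i\<in>I. y i))"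
      by simp
  qed simp
  finally show ?thesis unfolding Qs_def by (simp add: sum_distrib_left)
qed

lemma Qs_empty[simp]: "Qs a {} y = a 0"
  unfolding Qs_def by simp

lemma Qs_upd:
  assumes "x \<notin> V" shows "Qs a V (y(x := t)) = Qs a V y"
  unfolding Qs_def
proof (rule sum.cong)
  fix I assume "I \<in> Pow V"
  then have "x \<notin> I" using assms by auto
  then show "a (card I) * prod (y(x := t)) I = a (card I) * prod y I"
    by (intro arg_cong[where f="\<lambda>u. a (card I) * u"] prod.cong) auto
qed simp

lemma Dl_upd:
  assumes "x \<notin> V" shows "Dl a V (y(x := t)) = Dl a V y"
  unfolding Dl_def using Qs_upd[OF assms] by simp

lemma Qs_cong:
  assumes "\<And>i. i \<in> V \<Longrightarrow> y i = z i" shows "Qs a V y = Qs a V z"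
  unfolding Qs_def
proof (rule sum.cong)
  fix I assume "I \<in> Pow V"
  then show "a (card I) * prod y I = a (card I) * prod z I"
    using assms by (intro arg_cong[where f="\<lambda>u. a (card I) * u"] prod.cong) auto
qed simp

lemma Dl_cong:
  assumes "\<And>i. i \<in> V \<Longrightarrow> y i = z i" shows "Dl a V y = Dl a V z"
  unfolding Dl_def by (simp add: Qs_cong[OF assms])

lemma Qs_reindex:
  assumes "inj_on h U"
  shows "Qs a (h ` U) y = Qs a U (y \<circ> h)"
proof -
  have P: "Pow (h ` U) = image h ` Pow U"
  proof
    show "Pow (h ` U) \<subseteq> image h ` Pow U"
    proof
      fix X assume "X \<in> Pow (h ` U)"
      then have "X = h ` (U \<inter> h -` X)" by blast
      then show "X \<in> image h ` Pow U" by blast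
    qed
  qed auto
  have "Qs a (h ` U) y = (\<Sum>I\<in>Pow U. a (card (h ` I)) * (\<Prod>i\<in>h ` I. y i))"
    unfolding Qs_def P using inj_on_image_Pow[OF assms] by (simp add: sum.reindex)
  also have "\<dots> = Qs a U (y \<circ> h)"
    unfolding Qs_def
  proof (rule sum.cong)
    fix I assume "I \<in> Pow U"
    then have "inj_on h I" using assms inj_on_subset by blast
    then show "a (card (h ` I)) * (\<Prod>i\<in>h ` I. y i) = a (card I) * prod (y \<circ> h) I"
      by (simp add: card_image prod.reindex)
  qed simp
  finally show ?thesis .
qed

lemma Dl_reindex:
  assumes "inj_on h U"
  shows "Dl a (h ` U) y = Dl a U (y \<circ> h)"
  unfolding Dl_def using Qs_reindex[OF assms] by simp

lemma pd_affine:
  assumes "\<And>z. f z = al z + z i * be z"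
    and "\<And>z t. al (z(i := t)) = al z" and "\<And>z t. be (z(i := t)) = be z"
  shows "pd i f y = be y"
proof -
  have "(\<lambda>t. f (y(i := t))) = (\<lambda>t. al y + t * be y)"
    using assms by (simp add: fun_eq_iff)
  moreover have "((\<lambda>t. al y + t * be y) has_real_derivative be y) (at (y i))"
    by (auto intro!: derivative_eq_intros)
  ultimately show ?thesis unfolding pd_def by (simp add: DERIV_imp_deriv)
qed

lemma Zpoly_Qs: "Zpoly m a y = Qs a {1..m} y"
proof -
  have cm: "card ` Pow {1..m} \<subseteq> {0..m}"
  proof
    fix k assume "k \<in> card ` Pow {1..m}"
    then obtain I where "I \<subseteq> {1..m}" "k = card I" by auto
    then have "k \<le> card {1..m}" using card_mono[of "{1..m}" I] by simp
    then show "k \<in> {0..m}" by simp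
  qed
  have "Qs a {1..m} y = (\<Sum>k\<in>{0..m}. \<Sum>I\<in>{I. I \<in> Pow {1..m} \<and> card I = k}. a (card I) * (\<Prod>i\<in>I. y i))"
    unfolding Qs_def by (rule sum.group[symmetric, OF _ _ cm]) simp_all
  also have "\<dots> = Zpoly m a y"
    unfolding Zpoly_def esym_def
  proof (rule sum.cong[OF refl])
    fix k assume "k \<in> {0..m}"
    have "{I. I \<in> Pow {1..m} \<and> card I = k} = {S. S \<subseteq> {1..m} \<and> card S = k}" by auto
    then show "(\<Sum>I\<in>{I. I \<in> Pow {1..m} \<and> card I = k}. a (card I) * prod y I) =
         a k * (\<Sum>S\<in>{S. S \<subseteq> {1..m} \<and> card S = k}. prod y S)"
      by (simp add: sum_distrib_left)
  qed
  finally show ?thesis by simp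
qed

lemma alg_id: "((B::real) + yj * C) * (B + yi * C) - C * (A + yi * B + yj * B + yi * yj * C) = B^2 - A * C"
  by (simp add: power2_eq_square algebra_simps)

lemma DeltaZ_Dl:
  assumes "i \<in> {1..m}" "j \<in> {1..m}" "i \<noteq> j"
  shows "DeltaZ (Zpoly m a) i j y = Dl a ({1..m} - {i, j}) y"
proof -
  define W where "W = {1..m} - {i, j}"
  have fW: "finite W" "i \<notin> W" "j \<notin> W" unfolding W_def by auto
  define A where "A = Qs a W"
  define B where "B = Qs (\<lambda>k. a (Suc k)) W"
  define C where "C = Qs (\<lambda>k. a (Suc (Suc k))) W"
  have e1: "{1..m} = insert i (insert j W)" and e2: "{1..m} = insert j (insert i W)"
    using assms unfolding W_def by auto
  have Z: "Zpoly m a z = A z + z i * B z + z j * B z + z i * z j * C z" for z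
    unfolding Zpoly_Qs e1 A_def B_def C_def using fW assms
    by (simp add: Qs_insert algebra_simps)
  have indA: "A (z(x := t)) = A z" if "x \<notin> W" for z x t
    unfolding A_def using Qs_upd[OF that] .
  have indB: "B (z(x := t)) = B z" if "x \<notin> W" for z x t
    unfolding B_def using Qs_upd[OF that] .
  have indC: "C (z(x := t)) = C z" if "x \<notin> W" for z x t
    unfolding C_def using Qs_upd[OF that] .
  note iA = indA[OF fW(2)] indA[OF fW(3)]
  note iB = indB[OF fW(2)] indB[OF fW(3)]
  note iC = indC[OF fW(2)] indC[OF fW(3)]
  have pdi: "pd i (Zpoly m a) = (\<lambda>z. B z + z j * C z)"
  proof
    fix z show "pd i (Zpoly m a) z = B z + z j * C z"
      apply (rule pd_affine[where al = "\<lambda>z. A z + z j * B z"])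
      subgoal by (simp add: Z algebra_simps)
      subgoal for z t using assms(3) by (simp only: iA iB fun_upd_other)
      subgoal for z t using assms(3) by (simp only: iB iC fun_upd_other)
      done
  qed
  have pdj: "pd j (Zpoly m a) z = B z + z i * C z" for z
      apply (rule pd_affine[where al = "\<lambda>z. A z + z i * B z"])
      subgoal by (simp add: Z algebra_simps)
      subgoal for z t using assms(3) by (simp only: iA iB) simp
      subgoal for z t using assms(3) by (simp only: iB iC) simp
      done
  have pdji: "pd j (pd i (Zpoly m a)) z = C z" for z
    unfolding pdi
      apply (rule pd_affine[where al = "\<lambda>z. B z"])
      subgoal by (simp add: algebra_simps)
      subgoal for z t by (simp only: iB)
      subgoal for z t by (simp only: iC)
      done
  have "DeltaZ (Zpoly m a) i j y = (B y + y j * C y) * (B y + y i * C y) - C y * Zpoly m a y"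
    unfolding DeltaZ_def pdji by (simp add: pdi pdj)
  also have "\<dots> = (B y)\<^sup>2 - A y * C y"
    unfolding Z[of y] by (rule alg_id)
  also have "\<dots> = Dl a W y"
    unfolding Dl_def A_def B_def C_def by simp
  finally show ?thesis unfolding W_def .
qed



lemma quad0:
  fixes al be ga :: real
  assumes "\<forall>t>0. 0 \<le> al + be * t + ga * t^2"
  shows "0 \<le> al"
proof (rule ccontr)
  assume "\<not> 0 \<le> al"
  then have al: "al < 0" by simp
  define M where "M = \<bar>be\<bar> + \<bar>ga\<bar> + 1"
  have M: "M \<ge> 1" unfolding M_def by simp
  define t where "t = min 1 (- al / (2 * M))"
  have "- al / (2 * M) > 0" using al M by (intro divide_pos_pos) auto
  then have t0: "t > 0" unfolding t_def by simp
  have t1: "t \<le> 1" unfolding t_def by simp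
  have t2: "t \<le> - al / (2 * M)" unfolding t_def by simp
  have "t^2 \<le> t" using t0 t1 by (simp add: power2_eq_square mult_left_le)
  have "be * t \<le> \<bar>be\<bar> * t" using t0 by (simp add: mult_right_mono)
  moreover have "ga * t^2 \<le> \<bar>ga\<bar> * t"
  proof -
    have "ga * t^2 \<le> \<bar>ga\<bar> * t^2" by (simp add: mult_right_mono)
    also have "\<dots> \<le> \<bar>ga\<bar> * t" using \<open>t^2 \<le> t\<close> by (simp add: mult_left_mono)
    finally show ?thesis .
  qed
  moreover have "M * t = \<bar>be\<bar> * t + \<bar>ga\<bar> * t + t" unfolding M_def by (simp add: algebra_simps)
  ultimately have "be * t + ga * t^2 \<le> M * t" using t0 by linarith
  also have "M * t \<le> M * (- al / (2 * M))" using t2 M by (intro mult_left_mono) auto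
  also have "\<dots> = - al / 2" using M by simp
  finally have "al + be * t + ga * t^2 < 0" using al by simp
  then show False using assms t0 by force
qed

lemma quad:
  fixes al be ga :: real
  assumes "\<forall>t>0. 0 \<le> al + be * t + ga * t^2"
  shows "0 \<le> al" "0 \<le> ga"
proof -
  show "0 \<le> al" using quad0[OF assms] .
  have "\<forall>s>0. 0 \<le> ga + be * s + al * s^2"
  proof (intro allI impI)
    fix s :: real assume s: "s > 0"
    have "(1/s) > 0" using s by simp
    then have "0 \<le> al + be * (1/s) + ga * (1/s)^2" using assms by blast
    then have "0 \<le> (al + be * (1/s) + ga * (1/s)^2) * s^2" by simp
    also have "\<dots> = ga + be * s + al * s^2" using s by (simp add: field_simps power2_eq_square)
    finally show "0 \<le> ga + be * s + al * s^2" .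
  qed
  then show "0 \<le> ga" by (rule quad0)
qed

definition Pos :: "(nat \<Rightarrow> real) \<Rightarrow> nat set \<Rightarrow> bool" where
  "Pos a V \<longleftrightarrow> (\<forall>y. (\<forall>c\<in>V. 0 < y c) \<longrightarrow> 0 \<le> Dl a V y)"

lemma delcon:
  assumes "finite V" "x \<notin> V" "Pos a (insert x V)"
  shows "Pos a V" "Pos (\<lambda>k. a (Suc k)) V"
proof -
  have both: "0 \<le> Dl a V y \<and> 0 \<le> Dl (\<lambda>k. a (Suc k)) V y" if y: "\<forall>c\<in>V. 0 < y c" for y
  proof -
    define q0 where "q0 = Qs a V y"
    define q1 where "q1 = Qs (\<lambda>k. a (Suc k)) V y"
    define q2 where "q2 = Qs (\<lambda>k. a (Suc (Suc k))) V y"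
    define q3 where "q3 = Qs (\<lambda>k. a (Suc (Suc (Suc k)))) V y"
    have "\<forall>t>0. 0 \<le> (q1^2 - q0 * q2) + (q1 * q2 - q0 * q3) * t + (q2^2 - q1 * q3) * t^2"
    proof (intro allI impI)
      fix t :: real assume t: "t > 0"
      have pos: "\<forall>c\<in>insert x V. 0 < (y(x := t)) c" using y t assms(2) by auto
      have "Dl a (insert x V) (y(x := t)) = (q1 + t * q2)^2 - (q0 + t * q1) * (q2 + t * q3)"
        unfolding Dl_def q0_def q1_def q2_def q3_def
        using assms(1,2) by (simp add: Qs_insert Qs_upd)
      also have "\<dots> = (q1^2 - q0 * q2) + (q1 * q2 - q0 * q3) * t + (q2^2 - q1 * q3) * t^2"
        by (simp add: power2_eq_square algebra_simps)
      finally show "0 \<le> (q1^2 - q0 * q2) + (q1 * q2 - q0 * q3) * t + (q2^2 - q1 * q3) * t^2"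
        using assms(3) pos unfolding Pos_def by metis
    qed
    from quad[OF this] show ?thesis
      unfolding Dl_def q0_def q1_def q2_def q3_def by simp
  qed
  show "Pos a V" using both unfolding Pos_def by blast
  show "Pos (\<lambda>k. a (Suc k)) V" using both unfolding Pos_def by blast
qed

lemma Pos_shift:
  "finite V \<Longrightarrow> card V = n \<Longrightarrow> Pos a V \<Longrightarrow> p + r \<le> n \<Longrightarrow>
     \<exists>V'. finite V' \<and> card V' = r \<and> Pos (\<lambda>k. a (k + p)) V'"
proof (induction n arbitrary: V a p r)
  case 0
  then show ?case by auto
next
  case (Suc n)
  then obtain x W where VW: "V = insert x W" "x \<notin> W" "finite W" "card W = n"
    by (metis card_Suc_eq finite_insert)
  have PW: "Pos a W" "Pos (\<lambda>k. a (Suc k)) W" using delcon[OF VW(3) VW(2)] Suc.prems VW(1) by auto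
  show ?case
  proof (cases "p + r \<le> n")
    case True
    then show ?thesis using Suc.IH[OF VW(3) VW(4) PW(1)] by blast
  next
    case False
    show ?thesis
    proof (cases p)
      case 0
      then have "r = Suc n" using False Suc.prems by simp
      then show ?thesis using Suc.prems 0 by (intro exI[of _ V]) simp
    next
      case (Suc p')
      then have "p' + r \<le> n" using Suc.prems by simp
      from Suc.IH[OF VW(3) VW(4) PW(2) this] obtain V' where
        "finite V'" "card V' = r" "Pos (\<lambda>k. a (Suc (k + p'))) V'" by auto
      then show ?thesis using Suc by auto
    qed
  qed
qed

lemma Pos_empty: "Pos b {} \<longleftrightarrow> b 0 * b 2 \<le> (b 1)^2"
  unfolding Pos_def Dl_def by (simp add: numeral_2_eq_2)

lemma Pos_lc:
  assumes "m \<ge> 2" "Pos a {3..m}"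
  shows "log_concave m a"
  unfolding log_concave_def
proof (intro allI impI)
  fix k assume k: "0 < k \<and> k < m"
  have "k - 1 + 0 \<le> m - 2" using k by arith
  from Pos_shift[OF _ _ assms(2) this] obtain V' where
    "finite V'" "card V' = 0" "Pos (\<lambda>j. a (j + (k - 1))) V'" by auto
  then have "Pos (\<lambda>j. a (j + (k - 1))) {}" by simp
  then show "a (k - 1) * a (k + 1) \<le> (a k)\<^sup>2"
    unfolding Pos_empty using k by (simp add: numeral_2_eq_2)
qed

lemma Qs_one_single:
  assumes "finite V" "Ic \<subseteq> V" "\<And>I. I \<subseteq> V \<Longrightarrow> I \<noteq> Ic \<Longrightarrow> b (card I) = 0"
  shows "Qs b V (\<lambda>_. 1) = b (card Ic)"
proof -
  have "Qs b V (\<lambda>_. 1) = (\<Sum>I\<in>Pow V. if I = Ic then b (card Ic) else 0)"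
    unfolding Qs_def by (rule sum.cong) (use assms(3) in auto)
  also have "\<dots> = b (card Ic)" using assms(1,2) by simp
  finally show ?thesis .
qed

lemma gap_exists:
  fixes a :: "nat \<Rightarrow> real"
  assumes "i < j" "j < k" "a i \<noteq> 0" "a k \<noteq> 0" "a j = 0"
  shows "\<exists>p q. p < j \<and> j < q \<and> q \<le> k \<and> a p \<noteq> 0 \<and> a q \<noteq> 0 \<and> (\<forall>l. p < l \<and> l < q \<longrightarrow> a l = 0)"
proof -
  define P where "P = {l. l < j \<and> a l \<noteq> 0}"
  define Q where "Q = {l. j < l \<and> l \<le> k \<and> a l \<noteq> 0}"
  have fP: "finite P" "P \<noteq> {}" unfolding P_def using assms by auto
  have fQ: "finite Q" "Q \<noteq> {}" unfolding Q_def using assms by auto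
  define p where "p = Max P"
  define q where "q = Min Q"
  have p: "p \<in> P" unfolding p_def using fP by simp
  have q: "q \<in> Q" unfolding q_def using fQ by simp
  have "a l = 0" if "p < l" "l < q" for l
  proof (rule ccontr)
    assume nz: "a l \<noteq> 0"
    consider "l < j" | "l = j" | "j < l" by linarith
    then show False
    proof cases
      case 1
      then have "l \<in> P" unfolding P_def using nz by simp
      then have "l \<le> p" unfolding p_def using fP by simp
      then show False using that by simp
    next
      case 2 then show False using nz assms by simp
    next
      case 3
      then have "l \<in> Q" unfolding Q_def using nz that q by (simp add: Q_def)
      then have "q \<le> l" unfolding q_def using fQ by simp
      then show False using that by simp
    qed
  qed
  then show ?thesis using p q unfolding P_def Q_def by blast
qed

lemma Pos_niz:
  assumes "m \<ge> 2" "Pos a {3..m}" "\<forall>k\<le>m. a k \<ge> 0"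
  shows "no_internal_zeros m a"
  unfolding no_internal_zeros_def
proof (intro allI impI)
  fix i j k assume h: "i < j \<and> j < k \<and> k \<le> m \<and> a i * a k \<noteq> 0"
  show "a j \<noteq> 0"
  proof
    assume aj: "a j = 0"
    from gap_exists[of i j k a] h aj obtain p q where pq: "p < j" "j < q" "q \<le> k" "a p \<noteq> 0" "a q \<noteq> 0"
      "\<And>l. p < l \<Longrightarrow> l < q \<Longrightarrow> a l = 0" by auto
    define r where "r = q - p - 2"
    have "p + r \<le> m - 2" unfolding r_def using pq h by arith
    from Pos_shift[OF _ _ assms(2) this] obtain V' where V': "finite V'" "card V' = r"
      "Pos (\<lambda>l. a (l + p)) V'" by auto
    define b where "b = (\<lambda>l. a (l + p))"
    have q0: "Qs b V' (\<lambda>_. 1) = a p"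
    proof -
      have "Qs b V' (\<lambda>_. 1) = b (card ({}::nat set))"
      proof (rule Qs_one_single[where Ic="{}"])
        fix I assume "I \<subseteq> V'" "I \<noteq> {}"
        then have "card I \<ge> 1" "card I \<le> r" using V' card_mono[of V' I] finite_subset[of I V']
          by (auto simp: card_gt_0_iff Suc_le_eq)
        then show "b (card I) = 0" unfolding b_def using pq(6)[of "card I + p"] pq(1,2) unfolding r_def by simp
      qed (use V' in auto)
      then show ?thesis unfolding b_def by simp
    qed
    have q1: "Qs (\<lambda>l. b (Suc l)) V' (\<lambda>_. 1) = 0"
    proof -
      have "Qs (\<lambda>l. b (Suc l)) V' (\<lambda>_. 1) = (\<lambda>l. b (Suc l)) (card ({}::nat set))"
      proof (rule Qs_one_single)
        fix I assume "I \<subseteq> V'" "I \<noteq> {}"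
        then have "card I \<le> r" using V' card_mono[of V' I] by auto
        then show "b (Suc (card I)) = 0" unfolding b_def using pq(6)[of "Suc (card I) + p"] pq(1,2) unfolding r_def by simp
      qed (use V' in auto)
      then show ?thesis unfolding b_def using pq(6)[of "Suc p"] pq(1,2) by simp
    qed
    have q2: "Qs (\<lambda>l. b (Suc (Suc l))) V' (\<lambda>_. 1) = a q"
    proof -
      have "Qs (\<lambda>l. b (Suc (Suc l))) V' (\<lambda>_. 1) = (\<lambda>l. b (Suc (Suc l))) (card V')"
      proof (rule Qs_one_single)
        fix I assume "I \<subseteq> V'" "I \<noteq> V'"
        then have "card I < r" using V' by (metis psubsetI psubset_card_mono)
        then show "b (Suc (Suc (card I))) = 0" unfolding b_def using pq(6)[of "Suc (Suc (card I)) + p"] pq(1,2) unfolding r_def by simp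
      qed (use V' in auto)
      moreover have "Suc (Suc (card V' + p)) = q" using V' pq(1,2) unfolding r_def by simp
      ultimately show ?thesis unfolding b_def by simp
    qed
    have "0 \<le> Dl b V' (\<lambda>_. 1)" using V'(3) unfolding Pos_def b_def by simp
    then have "a p * a q \<le> 0" unfolding Dl_def using q0 q1 q2 by simp
    moreover have "a p > 0" "a q > 0" using pq assms(3) h by (auto simp: less_le)
    ultimately show False using mult_pos_pos[of "a p" "a q"] by linarith
  qed
qed



definition cnt :: "nat set \<Rightarrow> nat \<Rightarrow> nat" where
  "cnt S x = card {z\<in>S. z \<le> x}"

definition domi :: "nat set \<Rightarrow> nat set \<Rightarrow> bool" where
  "domi I J \<longleftrightarrow> (\<forall>x. cnt I x \<le> cnt J x)"

definition xz :: "nat set \<Rightarrow> nat set \<Rightarrow> nat" where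
  "xz I J = (LEAST x. cnt J x < cnt I x)"

definition iota :: "nat set \<times> nat set \<Rightarrow> nat set \<times> nat set" where
  "iota p = (let I = fst p; J = snd p; x = xz I J in
     ({z\<in>I. z \<le> x} \<union> {z\<in>J. x < z}, {z\<in>J. z \<le> x} \<union> {z\<in>I. x < z}))"

definition gg :: "(nat \<Rightarrow> real) \<Rightarrow> nat \<Rightarrow> nat \<Rightarrow> real" where
  "gg a i j = a (Suc i) * a (Suc j) - a i * a (Suc (Suc j))"

lemma fin_le: "finite {z\<in>S. z \<le> (x::nat)}"
  by (rule finite_subset[of _ "{..x}"]) auto

lemma cnt_0: "cnt S 0 \<le> 1"
proof -
  have "{z\<in>S. z \<le> 0} \<subseteq> {0}" by auto
  then show ?thesis unfolding cnt_def using card_mono[of "{0::nat}"] by fastforce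
qed

lemma cnt_Suc: "cnt S (Suc y) \<le> Suc (cnt S y)"
proof -
  have "{z\<in>S. z \<le> Suc y} \<subseteq> insert (Suc y) {z\<in>S. z \<le> y}" by auto
  then have "cnt S (Suc y) \<le> card (insert (Suc y) {z\<in>S. z \<le> y})"
    unfolding cnt_def by (intro card_mono) (auto simp: fin_le)
  also have "\<dots> \<le> Suc (cnt S y)" unfolding cnt_def by (simp add: card_insert_le_m1 fin_le card_insert_if)
  finally show ?thesis .
qed

lemma cnt_mono: "y \<le> x \<Longrightarrow> cnt S y \<le> cnt S x"
  unfolding cnt_def by (intro card_mono fin_le) auto

lemma xz_props:
  assumes "\<not> domi I J"
  shows "cnt I (xz I J) = Suc (cnt J (xz I J))" "\<And>x. x < xz I J \<Longrightarrow> cnt I x \<le> cnt J x"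
proof -
  obtain x where x: "cnt J x < cnt I x" using assms unfolding domi_def by (auto simp: not_le)
  have lt: "cnt J (xz I J) < cnt I (xz I J)" unfolding xz_def by (rule LeastI[of _ x]) (rule x)
  show before: "\<And>x. x < xz I J \<Longrightarrow> cnt I x \<le> cnt J x"
    unfolding xz_def using not_less_Least not_le by blast
  show "cnt I (xz I J) = Suc (cnt J (xz I J))"
  proof (cases "xz I J")
    case 0
    then show ?thesis using lt cnt_0[of I] by simp
  next
    case (Suc y)
    have "cnt I y \<le> cnt J y" using before Suc by simp
    moreover have "cnt I (Suc y) \<le> Suc (cnt I y)" by (rule cnt_Suc)
    moreover have "cnt J y \<le> cnt J (Suc y)" by (rule cnt_mono) simp
    ultimately show ?thesis using lt Suc by simp
  qed
qed

lemma iota_cnt: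
  assumes "z \<le> xz I J"
  shows "cnt (fst (iota (I, J))) z = cnt I z" "cnt (snd (iota (I, J))) z = cnt J z"
proof -
  have "{w \<in> fst (iota (I, J)). w \<le> z} = {w\<in>I. w \<le> z}"
    using assms unfolding iota_def Let_def by auto
  then show "cnt (fst (iota (I, J))) z = cnt I z" unfolding cnt_def by simp
  have "{w \<in> snd (iota (I, J)). w \<le> z} = {w\<in>J. w \<le> z}"
    using assms unfolding iota_def Let_def by auto
  then show "cnt (snd (iota (I, J))) z = cnt J z" unfolding cnt_def by simp
qed

lemma iota_xz:
  assumes "\<not> domi I J"
  shows "\<not> domi (fst (iota (I, J))) (snd (iota (I, J)))"
    "xz (fst (iota (I, J))) (snd (iota (I, J))) = xz I J"
proof -
  define I' where "I' = fst (iota (I, J))"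
  define J' where "J' = snd (iota (I, J))"
  have c: "cnt I' x = cnt I x" "cnt J' x = cnt J x" if "x \<le> xz I J" for x
    using iota_cnt[OF that] unfolding I'_def J'_def by auto
  have a: "cnt J' (xz I J) < cnt I' (xz I J)" using c[of "xz I J"] xz_props(1)[OF assms] by simp
  then show "\<not> domi I' J'" unfolding domi_def by (auto simp: not_le)
  show "xz I' J' = xz I J"
    unfolding xz_def[of I' J']
  proof (rule Least_equality)
    show "cnt J' (xz I J) < cnt I' (xz I J)" by (rule a)
    fix y assume "cnt J' y < cnt I' y"
    show "xz I J \<le> y"
    proof (rule ccontr)
      assume "\<not> xz I J \<le> y"
      then have "y < xz I J" by simp
      then show False using c[of y] xz_props(2)[OF assms, of y] \<open>cnt J' y < cnt I' y\<close> by simp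
    qed
  qed
qed

lemma iota_iota:
  assumes "\<not> domi I J"
  shows "iota (iota (I, J)) = (I, J)"
proof -
  have e: "xz (fst (iota (I, J))) (snd (iota (I, J))) = xz I J" by (rule iota_xz(2)[OF assms])
  show ?thesis
    unfolding iota_def[of "iota (I, J)"] Let_def e unfolding iota_def Let_def by auto
qed

lemma iota_un_int:
  "fst (iota (I, J)) \<union> snd (iota (I, J)) = I \<union> J"
  "fst (iota (I, J)) \<inter> snd (iota (I, J)) = I \<inter> J"
  unfolding iota_def Let_def by auto

lemma iota_sub:
  "fst (iota (I, J)) \<subseteq> I \<union> J" "snd (iota (I, J)) \<subseteq> I \<union> J"
  unfolding iota_def Let_def by auto

lemma card_split:
  assumes "finite S"
  shows "card {z\<in>S. (x::nat) < z} = card S - cnt S x"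
proof -
  have "S = {z\<in>S. z \<le> x} \<union> {z\<in>S. x < z}" by auto
  moreover have "{z\<in>S. z \<le> x} \<inter> {z\<in>S. x < z} = {}" by auto
  ultimately have "card S = cnt S x + card {z\<in>S. x < z}"
    unfolding cnt_def using assms by (metis (no_types, lifting) card_Un_disjoint finite_Un)
  then show ?thesis by simp
qed

lemma cnt_le_card: "finite S \<Longrightarrow> cnt S x \<le> card S"
  unfolding cnt_def by (intro card_mono) auto

lemma iota_card:
  assumes "finite I" "finite J" "\<not> domi I J"
  shows "card (fst (iota (I, J))) = Suc (card J)" "card (snd (iota (I, J))) = card I - 1"
    "card I \<ge> 1"
proof -
  define x where "x = xz I J"
  have cx: "cnt I x = Suc (cnt J x)" unfolding x_def by (rule xz_props(1)[OF assms(3)])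
  have d1: "{z\<in>I. z \<le> x} \<inter> {z\<in>J. x < z} = {}" by auto
  have d2: "{z\<in>J. z \<le> x} \<inter> {z\<in>I. x < z} = {}" by auto
  have "card (fst (iota (I, J))) = cnt I x + card {z\<in>J. x < z}"
    unfolding iota_def Let_def cnt_def fst_conv x_def
    using assms d1[unfolded x_def] by (simp add: card_Un_disjoint fin_le)
  also have "\<dots> = Suc (card J)" using card_split[OF assms(2), of x] cnt_le_card[OF assms(2), of x] cx
    by simp
  finally show "card (fst (iota (I, J))) = Suc (card J)" .
  have "card (snd (iota (I, J))) = cnt J x + card {z\<in>I. x < z}"
    unfolding iota_def Let_def cnt_def snd_conv x_def
    using assms d2[unfolded x_def] by (simp add: card_Un_disjoint fin_le)
  also have "\<dots> = card I - 1" using card_split[OF assms(1), of x] cnt_le_card[OF assms(1), of x] cx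
    by simp
  finally show "card (snd (iota (I, J))) = card I - 1" .
  show "card I \<ge> 1" using cnt_le_card[OF assms(1), of x] cx by simp
qed

lemma involution_sum_zero:
  fixes g :: "'b \<Rightarrow> real"
  assumes "finite X" "\<And>x. x \<in> X \<Longrightarrow> f x \<in> X" "\<And>x. x \<in> X \<Longrightarrow> f (f x) = x"
    "\<And>x. x \<in> X \<Longrightarrow> g (f x) = - g x"
  shows "sum g X = 0"
proof -
  have "bij_betw f X X"
    by (rule bij_betw_byWitness[where f' = f]) (use assms in auto)
  then have "sum g X = sum (g \<circ> f) X"
    by (simp add: sum.reindex_bij_betw)
  also have "\<dots> = - sum g X" using assms(4) by (simp add: sum_negf)
  finally show ?thesis by simp
qed

lemma gg_anti: "1 \<le> i \<Longrightarrow> gg a (Suc j) (i - 1) = - gg a i j"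
  unfolding gg_def by (cases i) (auto simp: algebra_simps)

lemma sum_nondom_zero:
  assumes "finite X" "\<And>p. p \<in> X \<Longrightarrow> finite (fst p) \<and> finite (snd p)"
    "\<And>p. p \<in> X \<Longrightarrow> \<not> domi (fst p) (snd p) \<Longrightarrow> iota p \<in> X"
    "\<And>p. p \<in> X \<Longrightarrow> \<not> domi (fst p) (snd p) \<Longrightarrow> F (iota p) = F p"
  shows "(\<Sum>p\<in>{p\<in>X. \<not> domi (fst p) (snd p)}. gg a (card (fst p)) (card (snd p)) * F p) = 0"
proof (rule involution_sum_zero[where f = iota])
  show "finite {p \<in> X. \<not> domi (fst p) (snd p)}" using assms(1) by simp
next
  fix p assume p: "p \<in> {p \<in> X. \<not> domi (fst p) (snd p)}"
  obtain I J where pIJ: "p = (I, J)" by fastforce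
  have nd: "\<not> domi I J" "(I, J) \<in> X" using p pIJ by auto
  show "iota p \<in> {p \<in> X. \<not> domi (fst p) (snd p)}"
    using assms(3)[OF nd(2)] iota_xz(1)[OF nd(1)] nd pIJ by simp
  show "iota (iota p) = p" using iota_iota[OF nd(1)] pIJ by simp
  have fin: "finite I" "finite J" using assms(2)[OF nd(2)] by auto
  show "gg a (card (fst (iota p))) (card (snd (iota p))) * F (iota p) =
        - (gg a (card (fst p)) (card (snd p)) * F p)"
    using iota_card[OF fin nd(1)] gg_anti[of "card I" a "card J"] assms(4)[OF nd(2)] nd(1) pIJ by simp
qed

lemma domi_card:
  assumes "finite I" "finite J" "domi I J"
  shows "card I \<le> card J"
proof -
  define x where "x = \<Sum>(I \<union> J)"
  have "\<And>z. z \<in> I \<union> J \<Longrightarrow> z \<le> x" unfolding x_def using assms by (intro member_le_sum) auto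
  then have "{z\<in>I. z \<le> x} = I" "{z\<in>J. z \<le> x} = J" by auto
  then show ?thesis using assms(3) unfolding domi_def cnt_def by metis
qed



abbreviation wt :: "(nat \<Rightarrow> real) \<Rightarrow> nat set \<times> nat set \<Rightarrow> real" where
  "wt y p \<equiv> (\<Prod>i\<in>fst p. y i) * (\<Prod>i\<in>snd p. y i)"

lemma Dl_pairs:
  "Dl a V y = (\<Sum>p\<in>Pow V \<times> Pow V. gg a (card (fst p)) (card (snd p)) * wt y p)"
proof -
  have "Dl a V y = (\<Sum>I\<in>Pow V. \<Sum>J\<in>Pow V. a (Suc (card I)) * prod y I * (a (Suc (card J)) * prod y J))
     - (\<Sum>I\<in>Pow V. \<Sum>J\<in>Pow V. a (card I) * prod y I * (a (Suc (Suc (card J))) * prod y J))"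
    unfolding Dl_def Qs_def power2_eq_square sum_product by simp
  also have "\<dots> = (\<Sum>I\<in>Pow V. \<Sum>J\<in>Pow V. gg a (card I) (card J) * (prod y I * prod y J))"
    unfolding sum_subtractf[symmetric] gg_def by (simp add: algebra_simps)
  also have "\<dots> = (\<Sum>p\<in>Pow V \<times> Pow V. gg a (card (fst p)) (card (snd p)) * wt y p)"
    unfolding sum.cartesian_product by (simp add: case_prod_beta)
  finally show ?thesis .
qed

lemma wt_iota: "finite I \<Longrightarrow> finite J \<Longrightarrow> wt y (iota (I, J)) = wt y (I, J)"
proof -
  assume f: "finite I" "finite J"
  have f': "finite (fst (iota (I, J)))" "finite (snd (iota (I, J)))"
    using iota_sub[of I J] f finite_subset by blast+
  have "wt y (iota (I, J)) = prod y (fst (iota (I, J)) \<union> snd (iota (I, J))) * prod y (fst (iota (I, J)) \<inter> snd (iota (I, J)))"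
    using prod.union_inter[OF f', of y] by simp
  also have "\<dots> = prod y (I \<union> J) * prod y (I \<inter> J)" unfolding iota_un_int ..
  also have "\<dots> = wt y (I, J)" using prod.union_inter[OF f, of y] by simp
  finally show ?thesis .
qed

lemma sum_split_dom:
  assumes "finite X"
  shows "(\<Sum>p\<in>X. h p) = (\<Sum>p\<in>{p\<in>X. domi (fst p) (snd p)}. h p) + (\<Sum>p\<in>{p\<in>X. \<not> domi (fst p) (snd p)}. h p)"
proof -
  have "X = {p\<in>X. domi (fst p) (snd p)} \<union> {p\<in>X. \<not> domi (fst p) (snd p)}" by auto
  moreover have "{p\<in>X. domi (fst p) (snd p)} \<inter> {p\<in>X. \<not> domi (fst p) (snd p)} = {}" by auto
  ultimately show ?thesis using assms by (metis (no_types, lifting) finite_Un sum.union_disjoint)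
qed

lemma Dl_dom:
  assumes "finite V"
  shows "Dl a V y = (\<Sum>p\<in>{p\<in>Pow V \<times> Pow V. domi (fst p) (snd p)}. gg a (card (fst p)) (card (snd p)) * wt y p)"
proof -
  have z: "(\<Sum>p\<in>{p\<in>Pow V \<times> Pow V. \<not> domi (fst p) (snd p)}. gg a (card (fst p)) (card (snd p)) * wt y p) = 0"
  proof (rule sum_nondom_zero)
    show "finite (Pow V \<times> Pow V)" using assms by simp
    fix p assume p: "p \<in> Pow V \<times> Pow V"
    then show fp: "finite (fst p) \<and> finite (snd p)" using assms finite_subset by auto
    assume "\<not> domi (fst p) (snd p)"
    have "fst (iota p) \<subseteq> V" "snd (iota p) \<subseteq> V"
      using iota_sub[of "fst p" "snd p"] p by (auto simp: mem_Times_iff)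
    then show "iota p \<in> Pow V \<times> Pow V" by (simp add: mem_Times_iff)
    show "wt y (iota p) = wt y p" using wt_iota[of "fst p" "snd p" y] fp by simp
  qed
  show ?thesis unfolding Dl_pairs
    using sum_split_dom[of "Pow V \<times> Pow V" "\<lambda>p. gg a (card (fst p)) (card (snd p)) * wt y p"] z assms
    by simp
qed

definition kap :: "(nat \<Rightarrow> real) \<Rightarrow> nat \<Rightarrow> nat \<Rightarrow> real" where
  "kap a t u = (\<Sum>k=0..u. real (u choose k) * gg a (t + k) (t + u - k))"

lemma sum_Pow_card:
  assumes "finite U"
  shows "(\<Sum>K\<in>Pow U. f (card K)) = (\<Sum>k=0..card U. real (card U choose k) * f k)"
proof -
  have cm: "card ` Pow U \<subseteq> {0..card U}" using assms by (auto intro: card_mono)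
  have "(\<Sum>K\<in>Pow U. f (card K)) = (\<Sum>k\<in>{0..card U}. \<Sum>K\<in>{K. K \<in> Pow U \<and> card K = k}. f (card K))"
    by (rule sum.group[symmetric, OF _ _ cm]) (use assms in simp_all)
  also have "\<dots> = (\<Sum>k=0..card U. real (card U choose k) * f k)"
  proof (rule sum.cong[OF refl])
    fix k
    have "{K. K \<in> Pow U \<and> card K = k} = {K. K \<subseteq> U \<and> card K = k}" by auto
    then show "(\<Sum>K\<in>{K. K \<in> Pow U \<and> card K = k}. f (card K)) = real (card U choose k) * f k"
      using n_subsets[OF assms, of k] by simp
  qed
  finally show ?thesis .
qed

definition fib :: "nat set \<Rightarrow> nat set \<Rightarrow> (nat set \<times> nat set) set" where
  "fib T U = (\<lambda>K. (T \<union> K, T \<union> (U - K))) ` Pow U"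

lemma fib_char:
  assumes "T \<inter> U = {}"
  shows "p \<in> fib T U \<longleftrightarrow> fst p \<union> snd p = T \<union> U \<and> fst p \<inter> snd p = T"
proof
  assume "p \<in> fib T U" then show "fst p \<union> snd p = T \<union> U \<and> fst p \<inter> snd p = T"
    using assms unfolding fib_def by auto
next
  assume h: "fst p \<union> snd p = T \<union> U \<and> fst p \<inter> snd p = T"
  define K where "K = fst p - T"
  have "K \<in> Pow U" unfolding K_def using h by auto
  moreover have "p = (T \<union> K, T \<union> (U - K))"
  proof -
    have "fst p = T \<union> K" unfolding K_def using h by auto
    moreover have "snd p = T \<union> (U - K)" unfolding K_def using h assms by auto
    ultimately show ?thesis by (metis prod.collapse)
  qed
  ultimately show "p \<in> fib T U" unfolding fib_def by blast
qed

lemma fib_inj: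
  assumes "T \<inter> U = {}"
  shows "inj_on (\<lambda>K. (T \<union> K, T \<union> (U - K))) (Pow U)"
proof (rule inj_onI)
  fix K K' assume "K \<in> Pow U" "K' \<in> Pow U" "(T \<union> K, T \<union> (U - K)) = (T \<union> K', T \<union> (U - K'))"
  then have "(T \<union> K) - T = (T \<union> K') - T" by simp
  then show "K = K'" using assms \<open>K \<in> Pow U\<close> \<open>K' \<in> Pow U\<close> by auto
qed

lemma fib_sum:
  assumes "finite T" "finite U" "T \<inter> U = {}"
  shows "(\<Sum>p\<in>fib T U. gg a (card (fst p)) (card (snd p))) = kap a (card T) (card U)"
proof -
  have "(\<Sum>p\<in>fib T U. gg a (card (fst p)) (card (snd p)))
      = (\<Sum>K\<in>Pow U. gg a (card (T \<union> K)) (card (T \<union> (U - K))))"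
    unfolding fib_def by (simp add: sum.reindex[OF fib_inj[OF assms(3)]])
  also have "\<dots> = (\<Sum>K\<in>Pow U. gg a (card T + card K) (card T + card U - card K))"
  proof (rule sum.cong[OF refl])
    fix K assume K: "K \<in> Pow U"
    then have fK: "finite K" "K \<subseteq> U" using assms finite_subset by auto
    have "card (T \<union> K) = card T + card K" using fK assms by (intro card_Un_disjoint) auto
    moreover have "card (T \<union> (U - K)) = card T + (card U - card K)"
      using fK assms by (subst card_Un_disjoint) (auto simp: card_Diff_subset)
    moreover have "card K \<le> card U" using fK assms by (simp add: card_mono)
    ultimately show "gg a (card (T \<union> K)) (card (T \<union> (U - K))) = gg a (card T + card K) (card T + card U - card K)"
      by simp
  qed
  also have "\<dots> = kap a (card T) (card U)"
    unfolding kap_def using sum_Pow_card[OF assms(2), of "\<lambda>k. gg a (card T + k) (card T + card U - k)"]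
    by simp
  finally show ?thesis .
qed

lemma kap_nonneg:
  assumes "\<And>i j. i \<le> j \<Longrightarrow> j \<le> t + u \<Longrightarrow> 0 \<le> gg a i j"
  shows "0 \<le> kap a t u"
proof -
  define T where "T = {0..<t}"
  define U where "U = {t..<t+u}"
  have TU: "finite T" "finite U" "T \<inter> U = {}" "card T = t" "card U = u" unfolding T_def U_def by auto
  have fX: "finite (fib T U)" unfolding fib_def using TU by simp
  have memX: "finite (fst p) \<and> finite (snd p) \<and> card (snd p) \<le> t + u" if "p \<in> fib T U" for p
  proof -
    have "fst p \<subseteq> T \<union> U" "snd p \<subseteq> T \<union> U" using that fib_char[OF TU(3)] by auto
    moreover have "card (T \<union> U) = t + u" using TU by (simp add: card_Un_disjoint)
    ultimately show ?thesis using TU by (metis card_mono finite_Un finite_subset)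
  qed
  have "kap a t u = (\<Sum>p\<in>fib T U. gg a (card (fst p)) (card (snd p)) * 1)"
    using fib_sum[OF TU(1-3), of a] TU by simp
  also have "\<dots> = (\<Sum>p\<in>{p\<in>fib T U. domi (fst p) (snd p)}. gg a (card (fst p)) (card (snd p)) * 1)
      + (\<Sum>p\<in>{p\<in>fib T U. \<not> domi (fst p) (snd p)}. gg a (card (fst p)) (card (snd p)) * 1)"
    by (rule sum_split_dom[OF fX])
  also have "(\<Sum>p\<in>{p\<in>fib T U. \<not> domi (fst p) (snd p)}. gg a (card (fst p)) (card (snd p)) * 1) = 0"
  proof (rule sum_nondom_zero[OF fX])
    fix p assume p: "p \<in> fib T U"
    then show "finite (fst p) \<and> finite (snd p)" using memX by blast
    assume "\<not> domi (fst p) (snd p)"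
    show "iota p \<in> fib T U"
      using p iota_un_int[of "fst p" "snd p"] unfolding fib_char[OF TU(3)] by simp
  qed simp
  finally have "kap a t u = (\<Sum>p\<in>{p\<in>fib T U. domi (fst p) (snd p)}. gg a (card (fst p)) (card (snd p)))"
    by simp
  also have "\<dots> \<ge> 0"
  proof (rule sum_nonneg)
    fix p assume "p \<in> {p\<in>fib T U. domi (fst p) (snd p)}"
    then have "p \<in> fib T U" "domi (fst p) (snd p)" by auto
    then show "0 \<le> gg a (card (fst p)) (card (snd p))"
      using memX domi_card assms by blast
  qed
  finally show ?thesis .
qed



definition Tg :: "nat set \<Rightarrow> (nat set \<times> nat set) set" where
  "Tg V = {q. fst q \<subseteq> V \<and> snd q \<subseteq> V \<and> fst q \<inter> snd q = {}}"

abbreviation mnm :: "(nat \<Rightarrow> real) \<Rightarrow> nat set \<times> nat set \<Rightarrow> real" where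
  "mnm y q \<equiv> (\<Prod>i\<in>fst q. (y i)^2) * (\<Prod>i\<in>snd q. y i)"

lemma finite_Tg: "finite V \<Longrightarrow> finite (Tg V)"
  by (rule finite_subset[of _ "Pow V \<times> Pow V"]) (auto simp: Tg_def)

lemma Dl_mono:
  assumes "finite V"
  shows "Dl a V y = (\<Sum>q\<in>Tg V. kap a (card (fst q)) (card (snd q)) * mnm y q)"
proof -
  define key where "key = (\<lambda>p::nat set \<times> nat set. (fst p \<inter> snd p, (fst p \<union> snd p) - (fst p \<inter> snd p)))"
  have ks: "key ` (Pow V \<times> Pow V) \<subseteq> Tg V" unfolding key_def Tg_def by auto
  have "Dl a V y = (\<Sum>q\<in>Tg V. \<Sum>p\<in>{p. p \<in> Pow V \<times> Pow V \<and> key p = q}. gg a (card (fst p)) (card (snd p)) * wt y p)"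
    unfolding Dl_pairs
    by (rule sum.group[symmetric, OF _ _ ks]) (use assms finite_Tg in simp_all)
  also have "\<dots> = (\<Sum>q\<in>Tg V. kap a (card (fst q)) (card (snd q)) * mnm y q)"
  proof (rule sum.cong[OF refl])
    fix q assume q: "q \<in> Tg V"
    obtain T U where qTU: "q = (T, U)" by fastforce
    have TU: "T \<subseteq> V" "U \<subseteq> V" "T \<inter> U = {}" using q qTU unfolding Tg_def by auto
    have fTU: "finite T" "finite U" using TU assms by (auto intro: finite_subset)
    have fibe: "{p. p \<in> Pow V \<times> Pow V \<and> key p = q} = fib T U"
    proof -
      have "p \<in> Pow V \<times> Pow V \<and> key p = q \<longleftrightarrow> fst p \<union> snd p = T \<union> U \<and> fst p \<inter> snd p = T" for p
        unfolding key_def qTU using TU by (auto simp: mem_Times_iff)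
      then show ?thesis using fib_char[OF TU(3)] by auto
    qed
    have wtp: "wt y p = mnm y q" if "p \<in> fib T U" for p
    proof -
      have c: "fst p \<union> snd p = T \<union> U" "fst p \<inter> snd p = T" using that fib_char[OF TU(3)] by auto
      have fp: "finite (fst p)" "finite (snd p)" using c fTU by (metis finite_Un)+
      have "wt y p = prod y (T \<union> U) * prod y T"
        using prod.union_inter[OF fp, of y] c by simp
      also have "\<dots> = mnm y q"
        unfolding qTU using fTU TU(3) by (simp add: prod.union_disjoint power2_eq_square prod.distrib)
      finally show ?thesis .
    qed
    have "(\<Sum>p\<in>fib T U. gg a (card (fst p)) (card (snd p)) * wt y p)
        = (\<Sum>p\<in>fib T U. gg a (card (fst p)) (card (snd p))) * mnm y q"
      using wtp by (simp add: sum_distrib_right)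
    then show "(\<Sum>p\<in>{p. p \<in> Pow V \<times> Pow V \<and> key p = q}. gg a (card (fst p)) (card (snd p)) * wt y p)
        = kap a (card (fst q)) (card (snd q)) * mnm y q"
      unfolding fibe using fib_sum[OF fTU TU(3), of a] qTU by simp
  qed
  finally show ?thesis .
qed

definition Mt :: "nat set \<Rightarrow> nat \<Rightarrow> nat \<Rightarrow> (nat \<Rightarrow> real) \<Rightarrow> real" where
  "Mt V t u y = (\<Sum>q\<in>{q\<in>Tg V. card (fst q) = t \<and> card (snd q) = u}. mnm y q)"

definition Rg :: "nat \<Rightarrow> (nat \<times> nat) set" where
  "Rg n = {tu. fst tu + snd tu \<le> n}"

lemma finite_Rg: "finite (Rg n)"
  by (rule finite_subset[of _ "{0..n} \<times> {0..n}"]) (auto simp: Rg_def)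

lemma Dl_Mt:
  assumes "finite V"
  shows "Dl a V y = (\<Sum>tu\<in>Rg (card V). kap a (fst tu) (snd tu) * Mt V (fst tu) (snd tu) y)"
proof -
  define cc where "cc = (\<lambda>q::nat set \<times> nat set. (card (fst q), card (snd q)))"
  have cs: "cc ` Tg V \<subseteq> Rg (card V)"
  proof
    fix tu assume "tu \<in> cc ` Tg V"
    then obtain q where q: "q \<in> Tg V" "tu = cc q" by auto
    then have "fst q \<union> snd q \<subseteq> V" "fst q \<inter> snd q = {}" unfolding Tg_def by auto
    moreover have "finite (fst q)" "finite (snd q)" using q assms finite_subset unfolding Tg_def by auto
    ultimately have "card (fst q) + card (snd q) \<le> card V"
      by (metis assms card_Un_disjoint card_mono)
    then show "tu \<in> Rg (card V)" unfolding Rg_def q cc_def by simp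
  qed
  have "Dl a V y = (\<Sum>tu\<in>Rg (card V). \<Sum>q\<in>{q. q \<in> Tg V \<and> cc q = tu}. kap a (card (fst q)) (card (snd q)) * mnm y q)"
    unfolding Dl_mono[OF assms]
    by (rule sum.group[symmetric, OF _ _ cs]) (use assms finite_Tg finite_Rg in simp_all)
  also have "\<dots> = (\<Sum>tu\<in>Rg (card V). kap a (fst tu) (snd tu) * Mt V (fst tu) (snd tu) y)"
  proof (rule sum.cong[OF refl])
    fix tu :: "nat \<times> nat"
    have "{q. q \<in> Tg V \<and> cc q = tu} = {q\<in>Tg V. card (fst q) = fst tu \<and> card (snd q) = snd tu}"
      unfolding cc_def by auto
    then show "(\<Sum>q\<in>{q. q \<in> Tg V \<and> cc q = tu}. kap a (card (fst q)) (card (snd q)) * mnm y q) =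
        kap a (fst tu) (snd tu) * Mt V (fst tu) (snd tu) y"
      unfolding Mt_def by (simp add: sum_distrib_left)
  qed
  finally show ?thesis .
qed

definition sh :: "nat \<Rightarrow> nat \<Rightarrow> nat list" where
  "sh t u = replicate t 2 @ replicate u 1"

lemma sh_partition: "is_partition (sh t u)"
  unfolding is_partition_def sh_def by (auto simp: sorted_append)

lemma mset_sh: "mset (sh t u) = replicate_mset t 2 + replicate_mset u 1"
  unfolding sh_def by simp

lemma sh_count: "count (mset (sh t u)) 2 = t" "count (mset (sh t u)) 1 = u" "length (sh t u) = t + u"
  unfolding mset_sh by (auto simp: sh_def)

lemma sh_inj: "sh t u = sh t' u' \<Longrightarrow> t = t' \<and> u = u'"
  using sh_count by metis

lemma monomial_sh:
  assumes "finite V" "t + u \<le> card V"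
  shows "monomial_sym (sh t u) V y = Mt V t u y"
proof -
  define A where "A = {alpha :: nat \<Rightarrow> nat. (\<forall>i. i \<notin> V \<longrightarrow> alpha i = 0) \<and>
          image_mset alpha (mset_set V) = mset (sh t u) + replicate_mset (card V - length (sh t u)) 0}"
  define B where "B = {q\<in>Tg V. card (fst q) = t \<and> card (snd q) = u}"
  define al where "al = (\<lambda>q::nat set \<times> nat set. \<lambda>i. if i \<in> fst q then 2 else if i \<in> snd q then 1 else (0::nat))"
  define be where "be = (\<lambda>alpha::nat \<Rightarrow> nat. ({i\<in>V. alpha i = 2}, {i\<in>V. alpha i = 1}))"
  have cntA: "alpha \<in> A \<longleftrightarrow> (\<forall>i. i \<notin> V \<longrightarrow> alpha i = 0) \<and>
      (\<forall>v. card {i\<in>V. alpha i = v} = (if v = 2 then t else 0) + (if v = 1 then u else 0)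
          + (if v = 0 then card V - (t + u) else 0))" for alpha
    unfolding A_def multiset_eq_iff count_image_mset_eq_card_vimage[OF assms(1)] count_union
      mset_sh sh_count(3) by auto
  have monoB: "mnm y q = (\<Prod>i\<in>V. y i ^ al q i)" if "q \<in> B" for q
  proof -
    have q: "fst q \<subseteq> V" "snd q \<subseteq> V" "fst q \<inter> snd q = {}" using that unfolding B_def Tg_def by auto
    have f: "finite (fst q)" "finite (snd q)" using q assms by (auto intro: finite_subset)
    have "(\<Prod>i\<in>V. y i ^ al q i) = (\<Prod>i\<in>fst q \<union> snd q. y i ^ al q i)"
      by (rule prod.mono_neutral_right) (use assms q in \<open>auto simp: al_def\<close>)
    also have "\<dots> = (\<Prod>i\<in>fst q. y i ^ al q i) * (\<Prod>i\<in>snd q. y i ^ al q i)"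
      using f q by (simp add: prod.union_disjoint)
    also have "\<dots> = mnm y q"
      using q by (auto simp: al_def intro!: arg_cong2[where f = "(*)"] prod.cong)
    finally show ?thesis by simp
  qed
  have "monomial_sym (sh t u) V y = (\<Sum>alpha\<in>A. \<Prod>i\<in>V. y i ^ alpha i)"
    unfolding monomial_sym_def A_def ..
  also have "\<dots> = (\<Sum>q\<in>B. mnm y q)"
  proof (rule sum.reindex_bij_witness[where i = al and j = be])
    fix alpha assume "alpha \<in> A"
    then have h: "\<forall>i. i \<notin> V \<longrightarrow> alpha i = 0"
      "\<And>v. card {i\<in>V. alpha i = v} = (if v = 2 then t else 0) + (if v = 1 then u else 0)
          + (if v = 0 then card V - (t + u) else 0)"
      using cntA by auto
    have vals: "alpha i \<in> {0, 1, 2}" for i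
    proof (cases "i \<in> V")
      case True
      show ?thesis
      proof (rule ccontr)
        assume "alpha i \<notin> {0, 1, 2}"
        then have "card {j\<in>V. alpha j = alpha i} = 0" using h(2)[of "alpha i"] by auto
        moreover have "{j\<in>V. alpha j = alpha i} \<noteq> {}" using True by auto
        ultimately show False using assms(1) by simp
      qed
    next
      case False then show ?thesis using h(1) by simp
    qed
    show albe: "al (be alpha) = alpha"
    proof
      fix i show "al (be alpha) i = alpha i"
        using vals[of i] h(1) unfolding al_def be_def by (cases "i \<in> V") auto
    qed
    show beB: "be alpha \<in> B"
      unfolding be_def B_def Tg_def using h(2)[of 2] h(2)[of 1] by auto
    show "mnm y (be alpha) = (\<Prod>i\<in>V. y i ^ alpha i)"
      using monoB[OF beB] \<open>al (be alpha) = alpha\<close> by simp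
  next
    fix q assume qB: "q \<in> B"
    have q: "fst q \<subseteq> V" "snd q \<subseteq> V" "fst q \<inter> snd q = {}" "card (fst q) = t" "card (snd q) = u"
      using qB unfolding B_def Tg_def by auto
    have f: "finite (fst q)" "finite (snd q)" using q assms by (auto intro: finite_subset)
    show "be (al q) = q"
      unfolding be_def al_def using q by (auto intro!: prod_eqI)
    have c2: "{i\<in>V. al q i = 2} = fst q" using q unfolding al_def by auto
    have c1: "{i\<in>V. al q i = 1} = snd q" using q unfolding al_def by auto
    have c0: "{i\<in>V. al q i = 0} = V - (fst q \<union> snd q)" using q unfolding al_def by auto
    have cv: "{i\<in>V. al q i = v} = {}" if "v \<noteq> 0" "v \<noteq> 1" "v \<noteq> 2" for v
      using that unfolding al_def by auto
    have cardc0: "card (V - (fst q \<union> snd q)) = card V - (t + u)"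
      using q f assms by (simp add: card_Diff_subset card_Un_disjoint)
    show "al q \<in> A" unfolding cntA
    proof (intro conjI allI impI)
      fix i assume "i \<notin> V" then show "al q i = 0" using q unfolding al_def by auto
    next
      fix v
      show "card {i\<in>V. al q i = v} = (if v = 2 then t else 0) + (if v = 1 then u else 0)
          + (if v = 0 then card V - (t + u) else 0)"
      proof (cases "v = 0 \<or> v = 1 \<or> v = 2")
        case True
        then show ?thesis using c2 c1 c0 cardc0 q by auto
      next
        case False
        then have e: "{i\<in>V. al q i = v} = {}" using cv[of v] by blast
        show ?thesis unfolding e using False by simp
      qed
    qed
  qed
  also have "\<dots> = Mt V t u y" unfolding Mt_def B_def ..
  finally show ?thesis .
qed



abbreviation sl :: "nat set \<Rightarrow> nat list" where "sl S \<equiv> sorted_list_of_set S"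

lemma sl_len: "finite S \<Longrightarrow> length (sl S) = card S" by simp

lemma sl_mono: "finite S \<Longrightarrow> i < j \<Longrightarrow> j < card S \<Longrightarrow> sl S ! i < sl S ! j"
  using strict_sorted_list_of_set[of S] sorted_wrt_iff_nth_less by (metis sl_len)

lemma sl_le: "finite S \<Longrightarrow> i \<le> j \<Longrightarrow> j < card S \<Longrightarrow> sl S ! i \<le> sl S ! j"
  using sl_mono[of S i j] by (cases "i = j") auto

lemma sl_in: "finite S \<Longrightarrow> r < card S \<Longrightarrow> sl S ! r \<in> S"
  by (metis nth_mem set_sorted_list_of_set sl_len)

lemma sl_image: "finite S \<Longrightarrow> (\<lambda>r. sl S ! r) ` {..<card S} = S"
proof -
  assume f: "finite S"
  have "(\<lambda>r. sl S ! r) ` {..<card S} = set (sl S)"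
    unfolding set_conv_nth using f by auto
  then show ?thesis using f by simp
qed

lemma sl_ex: "finite S \<Longrightarrow> z \<in> S \<Longrightarrow> \<exists>s<card S. sl S ! s = z"
  using sl_image[of S] by (metis (no_types, lifting) imageE lessThan_iff)

lemma strict_seq:
  fixes f :: "nat \<Rightarrow> nat"
  assumes "\<And>r. Suc r < n \<Longrightarrow> f r < f (Suc r)" "r < s" "s < n"
  shows "f r < f s"
  using assms(2,3)
proof (induction s)
  case 0 then show ?case by simp
next
  case (Suc s)
  show ?case
  proof (cases "r = s")
    case True then show ?thesis using assms(1) Suc by simp
  next
    case False
    then have "f r < f s" using Suc by simp
    then show ?thesis using assms(1)[of s] Suc by simp
  qed
qed

lemma strict_inj:
  fixes f :: "nat \<Rightarrow> nat"
  assumes "\<And>r. Suc r < n \<Longrightarrow> f r < f (Suc r)" "m \<le> n"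
  shows "inj_on f {..<m}"
proof (rule inj_onI)
  fix r s assume "r \<in> {..<m}" "s \<in> {..<m}" "f r = f s"
  then show "r = s" using strict_seq[where n=n and f=f, OF assms(1), of r s] strict_seq[where n=n and f=f, OF assms(1), of s r] assms(2)
    by (metis lessThan_iff linorder_neqE_nat order_less_le_trans less_irrefl)
qed

lemma sl_of_strict:
  fixes f :: "nat \<Rightarrow> nat"
  assumes "\<And>r. Suc r < n \<Longrightarrow> f r < f (Suc r)"
  shows "sl (f ` {..<n}) = map f [0..<n]"
proof -
  have "sorted_wrt (<) (map f [0..<n])"
    unfolding sorted_wrt_iff_nth_less using strict_seq[where n=n and f=f, OF assms] by auto
  then have "sorted (map f [0..<n])" "distinct (map f [0..<n])"
    by (auto simp: strict_sorted_iff)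
  then have "sl (set (map f [0..<n])) = map f [0..<n]"
    by (rule sorted_list_of_set.idem_if_sorted_distinct)
  moreover have "set (map f [0..<n]) = f ` {..<n}" by auto
  ultimately show ?thesis by simp
qed

lemma dom_rows:
  assumes "finite I" "finite J" "domi I J" "r < card I" "card I \<le> card J"
  shows "sl J ! r \<le> sl I ! r"
proof (rule ccontr)
  assume "\<not> sl J ! r \<le> sl I ! r"
  then have gt: "sl I ! r < sl J ! r" by simp
  define x where "x = sl I ! r"
  have sub1: "(\<lambda>s. sl I ! s) ` {..r} \<subseteq> {z\<in>I. z \<le> x}"
    unfolding x_def using assms sl_in sl_le by auto
  have cI: "card ((\<lambda>s. sl I ! s) ` {..r}) = Suc r"
  proof -
    have "inj_on (\<lambda>s. sl I ! s) {..r}"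
      using assms by (intro inj_onI) (metis atMost_iff le_less_trans linorder_neqE_nat sl_mono less_irrefl)
    then show ?thesis by (simp add: card_image)
  qed
  have c1: "Suc r \<le> cnt I x" unfolding cnt_def using card_mono[OF fin_le sub1] cI by simp
  have sub2: "{z\<in>J. z \<le> x} \<subseteq> (\<lambda>s. sl J ! s) ` {..<r}"
  proof
    fix z assume z: "z \<in> {z\<in>J. z \<le> x}"
    then obtain s where s: "s < card J" "sl J ! s = z" using sl_ex[OF assms(2)] by auto
    have "s < r"
    proof (rule ccontr)
      assume "\<not> s < r"
      then have "sl J ! r \<le> sl J ! s" using sl_le[OF assms(2), of r s] s by simp
      then show False using z s gt unfolding x_def by simp
    qed
    then show "z \<in> (\<lambda>s. sl J ! s) ` {..<r}" using s by auto
  qed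
  have "cnt J x \<le> card ((\<lambda>s. sl J ! s) ` {..<r})" unfolding cnt_def
    by (rule card_mono[OF _ sub2]) simp
  also have "\<dots> \<le> r" using card_image_le[of "{..<r}" "\<lambda>s. sl J ! s"] by simp
  finally have "cnt J x \<le> r" .
  moreover have "cnt I x \<le> cnt J x" using assms(3) unfolding domi_def by blast
  ultimately show False using c1 by linarith
qed



definition SP :: "nat set \<Rightarrow> nat \<Rightarrow> nat \<Rightarrow> (nat set \<times> nat set) set" where
  "SP V l p = {q \<in> Pow V \<times> Pow V. domi (fst q) (snd q) \<and> card (fst q) = l \<and> card (snd q) = p}"

definition tab :: "nat \<Rightarrow> nat \<Rightarrow> nat set \<times> nat set \<Rightarrow> nat \<times> nat \<Rightarrow> nat" where
  "tab l p q = (\<lambda>(r, c). if c = 0 \<and> r < p then sl (snd q) ! r else if c = 1 \<and> r < l then sl (fst q) ! r else 0)"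

definition untab :: "nat \<Rightarrow> nat \<Rightarrow> (nat \<times> nat \<Rightarrow> nat) \<Rightarrow> nat set \<times> nat set" where
  "untab l p T = ((\<lambda>r. T (r, 1)) ` {..<l}, (\<lambda>r. T (r, 0)) ` {..<p})"

lemma cells_sh:
  assumes "l \<le> p"
  shows "(r, c) \<in> young_cells (sh l (p - l)) \<longleftrightarrow> (c = 0 \<and> r < p) \<or> (c = 1 \<and> r < l)"
proof -
  have len: "length (sh l (p - l)) = p" using assms unfolding sh_def by simp
  have nth: "sh l (p - l) ! r = (if r < l then 2 else 1)" if "r < p" for r
    using that assms unfolding sh_def by (auto simp: nth_append)
  have "(r, c) \<in> young_cells (sh l (p - l)) \<longleftrightarrow> r < p \<and> c < (if r < l then 2 else 1)"
    unfolding young_cells_def using len nth by auto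
  then show ?thesis using assms by (cases "r < l") auto
qed

lemma cells_sh_set:
  assumes "l \<le> p"
  shows "young_cells (sh l (p - l)) = (\<lambda>r. (r, 0)) ` {..<p} \<union> (\<lambda>r. (r, 1)) ` {..<l}"
  using cells_sh[OF assms] by auto

lemma ssyt_props:
  assumes "l \<le> p" "T \<in> ssyt (sh l (p - l)) V"
  shows "\<And>r c. \<not> ((c = 0 \<and> r < p) \<or> (c = 1 \<and> r < l)) \<Longrightarrow> T (r, c) = 0"
    "\<And>r. r < p \<Longrightarrow> T (r, 0) \<in> V" "\<And>r. r < l \<Longrightarrow> T (r, 1) \<in> V"
    "\<And>r. r < l \<Longrightarrow> T (r, 0) \<le> T (r, 1)"
    "\<And>r. Suc r < p \<Longrightarrow> T (r, 0) < T (Suc r, 0)"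
    "\<And>r. Suc r < l \<Longrightarrow> T (r, 1) < T (Suc r, 1)"
proof -
  note C = cells_sh[OF assms(1)]
  have z: "\<And>x. x \<notin> young_cells (sh l (p - l)) \<Longrightarrow> T x = 0"
    and v: "\<And>x. x \<in> young_cells (sh l (p - l)) \<Longrightarrow> T x \<in> V"
    and row: "\<And>r c. (r, c + 1) \<in> young_cells (sh l (p - l)) \<Longrightarrow> T (r, c) \<le> T (r, c + 1)"
    and col: "\<And>r c. (r + 1, c) \<in> young_cells (sh l (p - l)) \<Longrightarrow> T (r, c) < T (r + 1, c)"
    using assms(2) unfolding ssyt_def by blast+
  show "\<And>r c. \<not> ((c = 0 \<and> r < p) \<or> (c = 1 \<and> r < l)) \<Longrightarrow> T (r, c) = 0"
    using z C by blast
  show "\<And>r. r < p \<Longrightarrow> T (r, 0) \<in> V" using v C by blast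
  show "\<And>r. r < l \<Longrightarrow> T (r, 1) \<in> V" using v C by blast
  show "\<And>r. r < l \<Longrightarrow> T (r, 0) \<le> T (r, 1)"
  proof -
    fix r assume "r < l"
    then have "(r, 0 + 1) \<in> young_cells (sh l (p - l))" using C by simp
    then show "T (r, 0) \<le> T (r, 1)" using row by fastforce
  qed
  show "\<And>r. Suc r < p \<Longrightarrow> T (r, 0) < T (Suc r, 0)"
  proof -
    fix r assume "Suc r < p"
    then have "(r + 1, 0) \<in> young_cells (sh l (p - l))" using C by simp
    then show "T (r, 0) < T (Suc r, 0)" using col by fastforce
  qed
  show "\<And>r. Suc r < l \<Longrightarrow> T (r, 1) < T (Suc r, 1)"
  proof -
    fix r assume "Suc r < l"
    then have "(r + 1, 1) \<in> young_cells (sh l (p - l))" using C by simp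
    then show "T (r, 1) < T (Suc r, 1)" using col by fastforce
  qed
qed

lemma card_le_image:
  assumes "inj_on f A"
  shows "card {z \<in> f ` A. z \<le> x} = card {r\<in>A. f r \<le> (x::nat)}"
proof -
  have "{z \<in> f ` A. z \<le> x} = f ` {r\<in>A. f r \<le> x}" by auto
  moreover have "inj_on f {r\<in>A. f r \<le> x}" using assms inj_on_subset by fastforce
  ultimately show ?thesis by (simp add: card_image)
qed

lemma schur_sh:
  assumes "finite V" "l \<le> p"
  shows "schur (sh l (p - l)) V y = (\<Sum>q\<in>SP V l p. wt y q)"
  unfolding schur_def
proof (rule sum.reindex_bij_witness[where i = "tab l p" and j = "untab l p"])
  fix T assume T: "T \<in> ssyt (sh l (p - l)) V"
  note tp = ssyt_props[OF assms(2) T]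
  have inj0: "inj_on (\<lambda>r. T (r, 0)) {..<p}" by (rule strict_inj[where n = p]) (use tp in auto)
  have inj1: "inj_on (\<lambda>r. T (r, 1)) {..<l}" by (rule strict_inj[where n = l]) (use tp in auto)
  have sl0: "sl ((\<lambda>r. T (r, 0)) ` {..<p}) = map (\<lambda>r. T (r, 0)) [0..<p]"
    by (rule sl_of_strict) (use tp in auto)
  have sl1: "sl ((\<lambda>r. T (r, 1)) ` {..<l}) = map (\<lambda>r. T (r, 1)) [0..<l]"
    by (rule sl_of_strict) (use tp in auto)
  show "tab l p (untab l p T) = T"
  proof
    fix x :: "nat \<times> nat"
    obtain r c where x: "x = (r, c)" by fastforce
    show "tab l p (untab l p T) x = T x"
      unfolding x tab_def untab_def using sl0 sl1 tp(1)[of c r] by auto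
  qed
  show "untab l p T \<in> SP V l p"
    unfolding SP_def untab_def
  proof (intro CollectI conjI)
    show "((\<lambda>r. T (r, 1)) ` {..<l}, (\<lambda>r. T (r, 0)) ` {..<p}) \<in> Pow V \<times> Pow V"
      using tp by auto
    show "card (fst ((\<lambda>r. T (r, 1)) ` {..<l}, (\<lambda>r. T (r, 0)) ` {..<p})) = l"
      using inj1 by (simp add: card_image)
    show "card (snd ((\<lambda>r. T (r, 1)) ` {..<l}, (\<lambda>r. T (r, 0)) ` {..<p})) = p"
      using inj0 by (simp add: card_image)
    show "domi (fst ((\<lambda>r. T (r, 1)) ` {..<l}, (\<lambda>r. T (r, 0)) ` {..<p}))
               (snd ((\<lambda>r. T (r, 1)) ` {..<l}, (\<lambda>r. T (r, 0)) ` {..<p}))"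
      unfolding domi_def cnt_def fst_conv snd_conv
    proof
      fix x
      have "{r\<in>{..<l}. T (r, 1) \<le> x} \<subseteq> {r\<in>{..<p}. T (r, 0) \<le> x}"
      proof
        fix r assume "r \<in> {r\<in>{..<l}. T (r, 1) \<le> x}"
        then have "r < l" "T (r, 1) \<le> x" by auto
        then show "r \<in> {r\<in>{..<p}. T (r, 0) \<le> x}" using tp(4)[of r] assms(2) by auto
      qed
      then have "card {r\<in>{..<l}. T (r, 1) \<le> x} \<le> card {r\<in>{..<p}. T (r, 0) \<le> x}"
        by (rule card_mono[rotated]) simp
      then show "card {z \<in> (\<lambda>r. T (r, 1)) ` {..<l}. z \<le> x} \<le> card {z \<in> (\<lambda>r. T (r, 0)) ` {..<p}. z \<le> x}"
        using card_le_image[OF inj0] card_le_image[OF inj1] by simp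
    qed
  qed
  have "(\<Prod>x\<in>young_cells (sh l (p - l)). y (T x))
      = (\<Prod>x\<in>(\<lambda>r. (r, 0)) ` {..<p}. y (T x)) * (\<Prod>x\<in>(\<lambda>r. (r, 1)) ` {..<l}. y (T x))"
    unfolding cells_sh_set[OF assms(2)] by (rule prod.union_disjoint) auto
  also have "\<dots> = (\<Prod>r\<in>{..<p}. y (T (r, 0))) * (\<Prod>r\<in>{..<l}. y (T (r, 1)))"
    by (simp add: prod.reindex inj_on_def)
  also have "\<dots> = wt y (untab l p T)"
    unfolding untab_def using inj0 inj1 by (simp add: prod.reindex)
  finally show "wt y (untab l p T) = (\<Prod>x\<in>young_cells (sh l (p - l)). y (T x))" by simp
next
  fix q assume q: "q \<in> SP V l p"
  obtain I J where qIJ: "q = (I, J)" by fastforce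
  have h: "I \<subseteq> V" "J \<subseteq> V" "domi I J" "card I = l" "card J = p"
    using q unfolding qIJ SP_def by auto
  have f: "finite I" "finite J" using h assms(1) by (auto intro: finite_subset)
  show "untab l p (tab l p q) = q"
  proof -
    have "(\<lambda>r. tab l p q (r, 1)) ` {..<l} = (\<lambda>r. sl I ! r) ` {..<card I}"
      unfolding tab_def qIJ h(4) by auto
    moreover have "(\<lambda>r. tab l p q (r, 0)) ` {..<p} = (\<lambda>r. sl J ! r) ` {..<card J}"
      unfolding tab_def qIJ h(5) by auto
    ultimately show ?thesis unfolding untab_def qIJ using sl_image f by simp
  qed
  show "tab l p q \<in> ssyt (sh l (p - l)) V"
    unfolding ssyt_def
  proof (intro CollectI conjI allI impI ballI)
    fix x :: "nat \<times> nat" assume "x \<notin> young_cells (sh l (p - l))"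
    then show "tab l p q x = 0" unfolding tab_def using cells_sh[OF assms(2)]
      by (cases x) auto
  next
    fix x :: "nat \<times> nat" assume "x \<in> young_cells (sh l (p - l))"
    then show "tab l p q x \<in> V" unfolding tab_def qIJ using cells_sh[OF assms(2)] sl_in f h
      by (cases x) auto
  next
    fix r c assume "(r, c + 1) \<in> young_cells (sh l (p - l))"
    then have rc: "c = 0" "r < l" using cells_sh[OF assms(2)] by auto
    then show "tab l p q (r, c) \<le> tab l p q (r, c + 1)"
      unfolding tab_def qIJ using dom_rows[OF f h(3), of r] h assms(2) by auto
  next
    fix r c assume "(r + 1, c) \<in> young_cells (sh l (p - l))"
    then have "(c = 0 \<and> Suc r < p) \<or> (c = 1 \<and> Suc r < l)" using cells_sh[OF assms(2)] by auto
    then show "tab l p q (r, c) < tab l p q (r + 1, c)"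
      unfolding tab_def qIJ using sl_mono f h by auto
  qed
qed



lemma card_3m: "card {3..m} = m - 2" by simp

lemma ray_Pos:
  assumes "m \<ge> 2" "rayleigh m (Zpoly m a)"
  shows "Pos a {3..m}"
  unfolding Pos_def
proof (intro allI impI)
  fix y :: "nat \<Rightarrow> real" assume y: "\<forall>c\<in>{3..m}. 0 < y c"
  define y' where "y' = y(1 := 1, 2 := 1)"
  have "\<forall>c\<in>{1..m}. 0 < y' c" unfolding y'_def using y by auto
  then have "0 \<le> DeltaZ (Zpoly m a) 1 2 y'" using assms unfolding rayleigh_def by auto
  also have "DeltaZ (Zpoly m a) 1 2 y' = Dl a ({1..m} - {1, 2}) y'"
    by (rule DeltaZ_Dl) (use assms in auto)
  also have "{1..m} - {1, 2} = {3..m}" by auto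
  also have "Dl a {3..m} y' = Dl a {3..m} y" by (rule Dl_cong) (auto simp: y'_def)
  finally show "0 \<le> Dl a {3..m} y" .
qed

lemma Pos_ray:
  assumes "m \<ge> 2" "Pos a {3..m}"
  shows "rayleigh m (Zpoly m a)"
  unfolding rayleigh_def
proof (intro ballI impI allI)
  fix i j :: nat and y :: "nat \<Rightarrow> real" assume ij: "i \<in> {1..m}" "j \<in> {1..m}" "i \<noteq> j" and y: "\<forall>c\<in>{1..m}. 0 < y c"
  define W where "W = {1..m} - {i, j}"
  have "card W = m - 2" unfolding W_def using ij by (simp add: card_Diff_subset)
  then have "card {3..m} = card W" by simp
  then obtain h where h: "bij_betw h {3..m} W" using finite_same_card_bij[of "{3..m}" W]
    unfolding W_def by auto
  have "DeltaZ (Zpoly m a) i j y = Dl a W y" unfolding W_def by (rule DeltaZ_Dl[OF ij])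
  also have "\<dots> = Dl a (h ` {3..m}) y" using h by (simp add: bij_betw_def)
  also have "\<dots> = Dl a {3..m} (y \<circ> h)" by (rule Dl_reindex) (use h in \<open>simp add: bij_betw_def\<close>)
  finally have e: "DeltaZ (Zpoly m a) i j y = Dl a {3..m} (y \<circ> h)" .
  have "\<forall>c\<in>{3..m}. 0 < (y \<circ> h) c"
  proof
    fix c assume "c \<in> {3..m}"
    then have "h c \<in> W" using h by (auto simp: bij_betw_def)
    then show "0 < (y \<circ> h) c" using y unfolding W_def by auto
  qed
  then show "0 \<le> DeltaZ (Zpoly m a) i j y" using assms(2) unfolding e Pos_def by blast
qed

lemma lc_gg:
  assumes nn: "\<forall>k\<le>m. a k \<ge> 0" and lc: "log_concave m a" and niz: "no_internal_zeros m a"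
    and ij: "i \<le> j" "j + 2 \<le> m"
  shows "0 \<le> gg a i j"
proof (cases "a i = 0 \<or> a (j + 2) = 0")
  case True
  have "0 \<le> a (Suc i) * a (Suc j)" using nn ij by simp
  then show ?thesis unfolding gg_def using True by auto
next
  case False
  then have ai: "a i > 0" "a (j + 2) > 0" using nn ij by (auto simp: less_le)
  have mid: "a k > 0" if "i < k" "k < j + 2" for k
  proof -
    have "a i * a (j + 2) \<noteq> 0" using ai by simp
    then have "a k \<noteq> 0" using niz that ij unfolding no_internal_zeros_def by blast
    then show ?thesis using nn that ij by (auto simp: less_le)
  qed
  have lck: "a (k - 1) * a (k + 1) \<le> (a k)^2" if "0 < k" "k < m" for k
    using lc that unfolding log_concave_def by blast
  have P: "a i * a (i + d + 2) \<le> a (i + 1) * a (i + d + 1)" if "i + d \<le> j" for d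
    using that
  proof (induction d)
    case 0
    then show ?case using lck[of "i + 1"] ij by (simp add: power2_eq_square numeral_2_eq_2 mult.commute)
  next
    case (Suc d)
    define s where "s = i + d"
    have IH: "a i * a (s + 2) \<le> a (i + 1) * a (s + 1)" using Suc unfolding s_def by simp
    have L: "a (s + 1) * a (s + 3) \<le> (a (s + 2))^2"
      using lck[of "s + 2"] Suc ij unfolding s_def by (simp add: numeral_3_eq_3 numeral_2_eq_2)
    have pos1: "a (s + 1) > 0" using mid[of "s + 1"] Suc ij unfolding s_def by simp
    have nn2: "a (s + 2) \<ge> 0" "a i \<ge> 0" using nn Suc ij unfolding s_def by auto
    have "a (s + 1) * (a i * a (s + 3)) = a i * (a (s + 1) * a (s + 3))" by (simp add: algebra_simps)
    also have "\<dots> \<le> a i * (a (s + 2))^2" using L nn2 by (simp add: mult_left_mono)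
    also have "\<dots> = (a i * a (s + 2)) * a (s + 2)" by (simp add: power2_eq_square algebra_simps)
    also have "\<dots> \<le> (a (i + 1) * a (s + 1)) * a (s + 2)" using IH nn2 by (simp add: mult_right_mono)
    also have "\<dots> = a (s + 1) * (a (i + 1) * a (s + 2))" by (simp add: algebra_simps)
    finally have "a i * a (s + 3) \<le> a (i + 1) * a (s + 2)" using pos1 by simp
    then show ?case unfolding s_def by (simp add: numeral_3_eq_3 numeral_2_eq_2 add.commute add.left_commute)
  qed
  from P[of "j - i"] ij have "a i * a (j + 2) \<le> a (i + 1) * a (j + 1)" by simp
  then show ?thesis unfolding gg_def by simp
qed



definition LP :: "nat \<Rightarrow> (nat \<times> nat) set" where
  "LP n = {lp. fst lp \<le> snd lp \<and> snd lp \<le> n}"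

lemma finite_LP: "finite (LP n)"
  by (rule finite_subset[of _ "{0..n} \<times> {0..n}"]) (auto simp: LP_def)

lemma Dl_schur:
  assumes "finite V"
  shows "Dl a V y = (\<Sum>lp\<in>LP (card V). gg a (fst lp) (snd lp) * schur (sh (fst lp) (snd lp - fst lp)) V y)"
proof -
  define D where "D = {p\<in>Pow V \<times> Pow V. domi (fst p) (snd p)}"
  define cc where "cc = (\<lambda>q::nat set \<times> nat set. (card (fst q), card (snd q)))"
  have cs: "cc ` D \<subseteq> LP (card V)"
  proof
    fix lp assume "lp \<in> cc ` D"
    then obtain q where q: "q \<in> D" "lp = cc q" by auto
    then have s: "fst q \<subseteq> V" "snd q \<subseteq> V" "domi (fst q) (snd q)" unfolding D_def by auto
    have f: "finite (fst q)" "finite (snd q)" using s assms by (auto intro: finite_subset)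
    have "card (fst q) \<le> card (snd q)" using domi_card[OF f s(3)] .
    moreover have "card (snd q) \<le> card V" using s assms by (simp add: card_mono)
    ultimately show "lp \<in> LP (card V)" unfolding LP_def q cc_def by simp
  qed
  have fD: "finite D" unfolding D_def using assms by simp
  have "Dl a V y = (\<Sum>lp\<in>LP (card V). \<Sum>q\<in>{q. q \<in> D \<and> cc q = lp}. gg a (card (fst q)) (card (snd q)) * wt y q)"
    unfolding Dl_dom[OF assms] D_def[symmetric]
    by (rule sum.group[symmetric, OF fD finite_LP cs])
  also have "\<dots> = (\<Sum>lp\<in>LP (card V). gg a (fst lp) (snd lp) * schur (sh (fst lp) (snd lp - fst lp)) V y)"
  proof (rule sum.cong[OF refl])
    fix lp assume lp: "lp \<in> LP (card V)"
    have e: "{q. q \<in> D \<and> cc q = lp} = SP V (fst lp) (snd lp)"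
      unfolding D_def cc_def SP_def by auto
    have "(\<Sum>q\<in>{q. q \<in> D \<and> cc q = lp}. gg a (card (fst q)) (card (snd q)) * wt y q)
        = (\<Sum>q\<in>SP V (fst lp) (snd lp). gg a (fst lp) (snd lp) * wt y q)"
      unfolding e by (rule sum.cong) (auto simp: SP_def)
    also have "\<dots> = gg a (fst lp) (snd lp) * schur (sh (fst lp) (snd lp - fst lp)) V y"
      using schur_sh[OF assms, of "fst lp" "snd lp" y] lp unfolding LP_def by (simp add: sum_distrib_left)
    finally show "(\<Sum>q\<in>{q. q \<in> D \<and> cc q = lp}. gg a (card (fst q)) (card (snd q)) * wt y q)
        = gg a (fst lp) (snd lp) * schur (sh (fst lp) (snd lp - fst lp)) V y" .
  qed
  finally show ?thesis .
qed

lemma pos_comb_from: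
  fixes f :: "'x \<Rightarrow> real"
  assumes "finite A" "\<And>x. x \<in> A \<Longrightarrow> 0 \<le> f x" "inj_on \<phi> A"
    "\<And>x. x \<in> A \<Longrightarrow> is_partition (\<phi> x)" "\<And>x. x \<in> A \<Longrightarrow> c (\<phi> x) = f x"
    "\<And>y. g y = (\<Sum>x\<in>A. f x * b (\<phi> x) y)"
  shows "pos_comb b g"
  unfolding pos_comb_def
proof (intro exI conjI ballI allI)
  define A' where "A' = {x\<in>A. 0 < f x}"
  have A': "A' \<subseteq> A" unfolding A'_def by auto
  show "finite (\<phi> ` A')" using assms(1) A' by (auto intro: finite_subset)
  fix lam assume "lam \<in> \<phi> ` A'"
  then obtain x where x: "x \<in> A'" "lam = \<phi> x" by auto
  then show "is_partition lam" using assms(4) A' by auto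
  show "0 < c lam" using x assms(5) A' unfolding A'_def by auto
next
  fix y
  define A' where "A' = {x\<in>A. 0 < f x}"
  have A': "A' \<subseteq> A" unfolding A'_def by auto
  have inj': "inj_on \<phi> A'" using assms(3) A' inj_on_subset by blast
  have "(\<Sum>lam\<in>\<phi> ` A'. c lam * b lam y) = (\<Sum>x\<in>A'. c (\<phi> x) * b (\<phi> x) y)"
    by (simp add: sum.reindex[OF inj'])
  also have "\<dots> = (\<Sum>x\<in>A'. f x * b (\<phi> x) y)" using assms(5) A' by (auto intro!: sum.cong)
  also have "\<dots> = (\<Sum>x\<in>A. f x * b (\<phi> x) y)"
  proof (rule sum.mono_neutral_left[OF assms(1) A'])
    show "\<forall>i\<in>A - A'. f i * b (\<phi> i) y = 0"
      using assms(2) unfolding A'_def by (auto simp: less_le)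
  qed
  finally show "g y = (\<Sum>lam\<in>\<phi> ` {x \<in> A. 0 < f x}. c lam * b lam y)"
    using assms(6) unfolding A'_def by simp
qed

lemma schur_nonneg:
  assumes "\<forall>c\<in>V. 0 < y c"
  shows "0 \<le> schur lam V y"
  unfolding schur_def
proof (rule sum_nonneg, rule prod_nonneg)
  fix T x assume "T \<in> ssyt lam V" "x \<in> young_cells lam"
  then have "T x \<in> V" unfolding ssyt_def by blast
  then show "0 \<le> y (T x)" using assms by (simp add: less_imp_le)
qed

lemma monomial_nonneg:
  assumes "\<forall>c\<in>V. 0 < y c"
  shows "0 \<le> monomial_sym lam V y"
  unfolding monomial_sym_def
  by (rule sum_nonneg, rule prod_nonneg) (use assms in \<open>auto simp: less_imp_le\<close>)

lemma comb_Pos: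
  assumes "pos_comb b g" "\<And>y. g y = Dl a V y"
    "\<And>lam y. \<forall>c\<in>V. 0 < y c \<Longrightarrow> 0 \<le> b lam y"
  shows "Pos a V"
  unfolding Pos_def
proof (intro allI impI)
  fix y :: "nat \<Rightarrow> real" assume y: "\<forall>c\<in>V. 0 < y c"
  obtain S c where S: "finite S" "\<forall>lam\<in>S. is_partition lam \<and> c lam > 0"
    "\<forall>y. g y = (\<Sum>lam\<in>S. c lam * b lam y)" using assms(1) unfolding pos_comb_def by blast
  have "0 \<le> (\<Sum>lam\<in>S. c lam * b lam y)"
    using S(2) assms(3)[OF y] by (intro sum_nonneg) (simp add: less_imp_le)
  then show "0 \<le> Dl a V y" using S(3) assms(2) by simp
qed

lemma b_schur:
  assumes "finite V" "\<And>i j. i \<le> j \<Longrightarrow> j \<le> card V \<Longrightarrow> 0 \<le> gg a i j" "\<And>y. g y = Dl a V y"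
  shows "pos_comb (\<lambda>lam. schur lam V) g"
proof (rule pos_comb_from[where A = "LP (card V)" and f = "\<lambda>lp. gg a (fst lp) (snd lp)"
      and \<phi> = "\<lambda>lp. sh (fst lp) (snd lp - fst lp)" and c = "\<lambda>lam. gg a (count (mset lam) 2) (length lam)"])
  show "finite (LP (card V))" by (rule finite_LP)
  show "\<And>x. x \<in> LP (card V) \<Longrightarrow> 0 \<le> gg a (fst x) (snd x)" using assms(2) unfolding LP_def by auto
  show "inj_on (\<lambda>lp. sh (fst lp) (snd lp - fst lp)) (LP (card V))"
  proof (rule inj_onI)
    fix x x' assume "x \<in> LP (card V)" "x' \<in> LP (card V)"
      "sh (fst x) (snd x - fst x) = sh (fst x') (snd x' - fst x')"
    then show "x = x'" using sh_inj unfolding LP_def by (metis le_add_diff_inverse prod.expand mem_Collect_eq)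
  qed
  show "\<And>x. x \<in> LP (card V) \<Longrightarrow> is_partition (sh (fst x) (snd x - fst x))" by (rule sh_partition)
  show "\<And>x. x \<in> LP (card V) \<Longrightarrow> gg a (count (mset (sh (fst x) (snd x - fst x))) 2) (length (sh (fst x) (snd x - fst x))) = gg a (fst x) (snd x)"
    unfolding LP_def by (simp add: sh_count)
  show "\<And>y. g y = (\<Sum>x\<in>LP (card V). gg a (fst x) (snd x) * schur (sh (fst x) (snd x - fst x)) V y)"
    using assms(3) Dl_schur[OF assms(1)] by simp
qed

lemma b_mono:
  assumes "finite V" "\<And>i j. i \<le> j \<Longrightarrow> j \<le> card V \<Longrightarrow> 0 \<le> gg a i j" "\<And>y. g y = Dl a V y"
  shows "pos_comb (\<lambda>lam. monomial_sym lam V) g"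
proof (rule pos_comb_from[where A = "Rg (card V)" and f = "\<lambda>tu. kap a (fst tu) (snd tu)"
      and \<phi> = "\<lambda>tu. sh (fst tu) (snd tu)" and c = "\<lambda>lam. kap a (count (mset lam) 2) (count (mset lam) 1)"])
  show "finite (Rg (card V))" by (rule finite_Rg)
  show "\<And>x. x \<in> Rg (card V) \<Longrightarrow> 0 \<le> kap a (fst x) (snd x)"
    using assms(2) unfolding Rg_def by (auto intro!: kap_nonneg)
  show "inj_on (\<lambda>tu. sh (fst tu) (snd tu)) (Rg (card V))"
    by (rule inj_onI) (metis sh_inj prod.expand)
  show "\<And>x. x \<in> Rg (card V) \<Longrightarrow> is_partition (sh (fst x) (snd x))" by (rule sh_partition)
  show "\<And>x. x \<in> Rg (card V) \<Longrightarrow> kap a (count (mset (sh (fst x) (snd x))) 2) (count (mset (sh (fst x) (snd x))) 1) = kap a (fst x) (snd x)"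
    using sh_count(1,2) by metis
  show "\<And>y. g y = (\<Sum>x\<in>Rg (card V). kap a (fst x) (snd x) * monomial_sym (sh (fst x) (snd x)) V y)"
  proof -
    fix y
    have "(\<Sum>x\<in>Rg (card V). kap a (fst x) (snd x) * monomial_sym (sh (fst x) (snd x)) V y)
        = (\<Sum>x\<in>Rg (card V). kap a (fst x) (snd x) * Mt V (fst x) (snd x) y)"
      by (rule sum.cong[OF refl]) (use assms(1) in \<open>simp add: Rg_def monomial_sh\<close>)
    then show "g y = (\<Sum>x\<in>Rg (card V). kap a (fst x) (snd x) * monomial_sym (sh (fst x) (snd x)) V y)"
      using assms(3) Dl_Mt[OF assms(1)] by simp
  qed
qed

theorem proposition3p6:
  fixes m :: nat and a :: "nat \<Rightarrow> real"
  assumes "m \<ge> 2"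
    and "\<forall>k\<le>m. a k \<ge> 0"
    and "\<exists>k\<le>m. a k \<noteq> 0"
  shows "(rayleigh m (Zpoly m a) \<longleftrightarrow> log_concave m a \<and> no_internal_zeros m a)
       \<and> (log_concave m a \<and> no_internal_zeros m a
            \<longleftrightarrow> pos_comb (\<lambda>lam. schur lam {3..m}) (DeltaZ (Zpoly m a) 1 2))
       \<and> (pos_comb (\<lambda>lam. schur lam {3..m}) (DeltaZ (Zpoly m a) 1 2)
            \<longleftrightarrow> pos_comb (\<lambda>lam. monomial_sym lam {3..m}) (DeltaZ (Zpoly m a) 1 2))"
proof -
  have D12: "DeltaZ (Zpoly m a) 1 2 y = Dl a {3..m} y" for y
  proof -
    have "DeltaZ (Zpoly m a) 1 2 y = Dl a ({1..m} - {1, 2}) y"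
      by (rule DeltaZ_Dl) (use assms(1) in auto)
    moreover have "{1..m} - {1, 2} = {3..m}" by auto
    ultimately show ?thesis by simp
  qed
  have A_B: "log_concave m a \<and> no_internal_zeros m a" if "Pos a {3..m}"
    using Pos_lc[OF assms(1) that] Pos_niz[OF assms(1) that assms(2)] by blast
  have ggpos: "\<And>i j. i \<le> j \<Longrightarrow> j \<le> card {3..m} \<Longrightarrow> 0 \<le> gg a i j"
    if "log_concave m a \<and> no_internal_zeros m a"
    using lc_gg[OF assms(2)] that assms(1) by simp
  have B_C: "pos_comb (\<lambda>lam. schur lam {3..m}) (DeltaZ (Zpoly m a) 1 2)"
    if "log_concave m a \<and> no_internal_zeros m a"
    by (rule b_schur[OF _ ggpos[OF that] D12]) simp
  have B_D: "pos_comb (\<lambda>lam. monomial_sym lam {3..m}) (DeltaZ (Zpoly m a) 1 2)"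
    if "log_concave m a \<and> no_internal_zeros m a"
    by (rule b_mono[OF _ ggpos[OF that] D12]) simp
  have C_P: "Pos a {3..m}" if "pos_comb (\<lambda>lam. schur lam {3..m}) (DeltaZ (Zpoly m a) 1 2)"
    by (rule comb_Pos[OF that D12]) (rule schur_nonneg)
  have D_P: "Pos a {3..m}" if "pos_comb (\<lambda>lam. monomial_sym lam {3..m}) (DeltaZ (Zpoly m a) 1 2)"
    by (rule comb_Pos[OF that D12]) (rule monomial_nonneg)
  have R_P: "Pos a {3..m}" if "rayleigh m (Zpoly m a)" using ray_Pos[OF assms(1) that] .
  have P_R: "rayleigh m (Zpoly m a)" if "Pos a {3..m}" using Pos_ray[OF assms(1) that] .
  show ?thesis using A_B B_C B_D C_P D_P R_P P_R by blast
qed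


end
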